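(* Let $\mathbf{H}\in\mathbb{H}^4$. The following are equivalent: (1) $\mathbf{Cov}_2(\mathbf{H})$ is isotropic; (2) $\mathbf{H}$ is either cubic (when $\mathbf{d}_2\neq0$) or isotropic (when $\mathbf{d}_2=0$); (3) $\mathbf{d}_2$ is isotropic.
   Context: $\mathbb{H}^4$ is the space of totally symmetric traceless fourth-order tensors on $\mathbb{R}^3$, with $SO(3)$-action $(g\star\mathbf{T})(x_1,\dots,x_n)=\mathbf{T}(g^{-1}x_1,\dots,g^{-1}x_n)$. $\mathbf{Cov}_2(\mathbf{H})\subset\mathrm{Sym}^2(\mathbb{R}^3)$ is the set of values at $\mathbf{H}$ of all $SO(3)$-equivariant polynomial maps $\mathbb{H}^4\to\mathrm{Sym}^2(\mathbb{R}^3)$. $(\mathbf{H}:\mathbf{H})_{ijkl}=H_{ijmn}H_{mnkl}$, $(\operatorname{tr}_{13}\mathbf{A})_{ij}=A_{kikj}$, $\mathbf{d}_2=\operatorname{tr}_{13}(\mathbf{H}:\mathbf{H})$. Symmetry group of a tensor: $\{g\in SO(3):g\star\mathbf{T}=\mathbf{T}\}$; of a family (or subspace): intersection of its members' groups; symmetry class: conjugacy class in $SO(3)$. Isotropic means class $[SO(3)]$; cubic means class $[\mathbb{O}]$, $\mathbb{O}$ the orientation-preserving symmetry group of a cube (order 24). *)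

theory Defs
  imports "HOL-Analysis.Analysis"
begin

text \<open>Tensors on R^3 in components w.r.t. the standard basis; indices range over the type 3.\<close>

type_synonym tensor2 = "3 \<Rightarrow> 3 \<Rightarrow> real"
type_synonym tensor4 = "3 \<Rightarrow> 3 \<Rightarrow> 3 \<Rightarrow> 3 \<Rightarrow> real"
type_synonym mat3 = "real^3^3"

definition SO3 :: "mat3 set" where
  "SO3 = {g. orthogonal_matrix g \<and> det g = 1}"

text \<open>(g * T)(x1,...,xn) = T(g^{-1} x1, ..., g^{-1} xn), written in components
  (g^{-1} = transpose g for g in SO(3)).\<close>
definition act2 :: "mat3 \<Rightarrow> tensor2 \<Rightarrow> tensor2" where
  "act2 g T = (\<lambda>i j. \<Sum>a\<in>UNIV. \<Sum>b\<in>UNIV. g$i$a * g$j$b * T a b)"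

definition act4 :: "mat3 \<Rightarrow> tensor4 \<Rightarrow> tensor4" where
  "act4 g T = (\<lambda>i j k l. \<Sum>a\<in>UNIV. \<Sum>b\<in>UNIV. \<Sum>c\<in>UNIV. \<Sum>d\<in>UNIV.
      g$i$a * g$j$b * g$k$c * g$l$d * T a b c d)"

definition Sym2 :: "tensor2 set" where
  "Sym2 = {S. \<forall>i j. S i j = S j i}"

text \<open>H^4: totally symmetric (invariant under the transpositions generating S_4) and traceless.\<close>
definition H4 :: "tensor4 set" where
  "H4 = {T. (\<forall>i j k l. T i j k l = T j i k l \<and> T i j k l = T i k j l \<and> T i j k l = T i j l k)
            \<and> (\<forall>k l. (\<Sum>i\<in>UNIV. T i i k l) = 0)}"

inductive polyfun :: "(tensor4 \<Rightarrow> real) \<Rightarrow> bool" where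
  pf_const: "polyfun (\<lambda>T. c)"
| pf_coord: "polyfun (\<lambda>T. T i j k l)"
| pf_add: "polyfun p \<Longrightarrow> polyfun q \<Longrightarrow> polyfun (\<lambda>T. p T + q T)"
| pf_mult: "polyfun p \<Longrightarrow> polyfun q \<Longrightarrow> polyfun (\<lambda>T. p T * q T)"

definition equiv_poly_map2 :: "(tensor4 \<Rightarrow> tensor2) \<Rightarrow> bool" where
  "equiv_poly_map2 F \<longleftrightarrow>
     (\<forall>i j. polyfun (\<lambda>T. F T i j))
   \<and> (\<forall>T\<in>H4. F T \<in> Sym2)
   \<and> (\<forall>g\<in>SO3. \<forall>T\<in>H4. F (act4 g T) = act2 g (F T))"

definition Cov2 :: "tensor4 \<Rightarrow> tensor2 set" where
  "Cov2 H = {F H | F. equiv_poly_map2 F}"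

definition symgroup2 :: "tensor2 \<Rightarrow> mat3 set" where
  "symgroup2 S = {g\<in>SO3. act2 g S = S}"

definition symgroup4 :: "tensor4 \<Rightarrow> mat3 set" where
  "symgroup4 T = {g\<in>SO3. act4 g T = T}"

definition symgroup2_fam :: "tensor2 set \<Rightarrow> mat3 set" where
  "symgroup2_fam F = {g\<in>SO3. \<forall>S\<in>F. g \<in> symgroup2 S}"

definition in_class :: "mat3 set \<Rightarrow> mat3 set \<Rightarrow> bool" where
  "in_class G C \<longleftrightarrow> (\<exists>g\<in>SO3. G = (\<lambda>h. g ** h ** matrix_inv g) ` C)"

definition cube :: "(real^3) set" where
  "cube = {x. \<forall>i. \<bar>x$i\<bar> \<le> 1}"

definition Octa :: "mat3 set" where
  "Octa = {g\<in>SO3. (\<lambda>x. g *v x) ` cube = cube}"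

definition d2 :: "tensor4 \<Rightarrow> tensor2" where
  "d2 H = (\<lambda>i j. \<Sum>k\<in>UNIV. \<Sum>m\<in>UNIV. \<Sum>n\<in>UNIV. H k i m n * H m n k j)"

end

theory Submission
  imports Defs
begin


lemma if1_mult: "(if P then 1 else 0) * (z::real) = (if P then z else 0)" by simp

lemma swap_mult_sum:
  fixes f :: "'i::finite \<Rightarrow> real" and g :: "'j::finite \<Rightarrow> real" and X :: "'i \<Rightarrow> 'j \<Rightarrow> real"
  shows "(\<Sum>a\<in>UNIV. f a * (\<Sum>b\<in>UNIV. g b * X a b)) = (\<Sum>b\<in>UNIV. g b * (\<Sum>a\<in>UNIV. f a * X a b))"
proof -
  have "(\<Sum>a\<in>UNIV. f a * (\<Sum>b\<in>UNIV. g b * X a b)) = (\<Sum>a\<in>UNIV. \<Sum>b\<in>UNIV. g b * (f a * X a b))"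
    by (simp add: sum_distrib_left mult.left_commute)
  also have "\<dots> = (\<Sum>b\<in>UNIV. \<Sum>a\<in>UNIV. g b * (f a * X a b))" by (rule sum.swap)
  also have "\<dots> = (\<Sum>b\<in>UNIV. g b * (\<Sum>a\<in>UNIV. f a * X a b))" by (simp add: sum_distrib_left)
  finally show ?thesis .
qed

lemma swap3:
  fixes F :: "'i::finite \<Rightarrow> 'j::finite \<Rightarrow> 'k::finite \<Rightarrow> real"
  shows "(\<Sum>k\<in>UNIV. \<Sum>m\<in>UNIV. \<Sum>n\<in>UNIV. F k m n) = (\<Sum>m\<in>UNIV. \<Sum>n\<in>UNIV. \<Sum>k\<in>UNIV. F k m n)"
proof -
  have "(\<Sum>k\<in>UNIV. \<Sum>m\<in>UNIV. \<Sum>n\<in>UNIV. F k m n) = (\<Sum>m\<in>UNIV. \<Sum>k\<in>UNIV. \<Sum>n\<in>UNIV. F k m n)"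
    by (rule sum.swap)
  also have "\<dots> = (\<Sum>m\<in>UNIV. \<Sum>n\<in>UNIV. \<Sum>k\<in>UNIV. F k m n)"
    by (rule sum.cong[OF refl], rule sum.swap)
  finally show ?thesis .
qed

lemma mat1_sum: "(\<Sum>a\<in>UNIV. (mat 1 :: mat3)$i$a * f a) = f i"
  by (simp add: mat_def if1_mult)

lemma orth_col: assumes "orthogonal_matrix (g::mat3)"
  shows "(\<Sum>k\<in>UNIV. g$k$a * g$k$b) = (if a = b then 1 else 0)"
proof -
  have "transpose g ** g = mat 1" using assms by (simp add: orthogonal_matrix_def)
  then have "(transpose g ** g)$a$b = (mat 1::mat3)$a$b" by simp
  then show ?thesis by (simp add: matrix_matrix_mult_def transpose_def mat_def)
qed

lemma orth_row: assumes "orthogonal_matrix (g::mat3)"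
  shows "(\<Sum>k\<in>UNIV. g$a$k * g$b$k) = (if a = b then 1 else 0)"
proof -
  have "g ** transpose g = mat 1" using assms by (simp add: orthogonal_matrix_def)
  then have "(g ** transpose g)$a$b = (mat 1::mat3)$a$b" by simp
  then show ?thesis by (simp add: matrix_matrix_mult_def transpose_def mat_def)
qed

lemma orth_pair: assumes "orthogonal_matrix (g::mat3)"
  shows "(\<Sum>k\<in>UNIV. (\<Sum>b\<in>UNIV. g$k$b * u b) * (\<Sum>c\<in>UNIV. g$k$c * v c)) = (\<Sum>b\<in>UNIV. u b * v b)"
proof -
  have "(\<Sum>k\<in>UNIV. (\<Sum>b\<in>UNIV. g$k$b * u b) * (\<Sum>c\<in>UNIV. g$k$c * v c))
      = (\<Sum>k\<in>UNIV. \<Sum>c\<in>UNIV. \<Sum>b\<in>UNIV. (g$k$b * g$k$c) * (u b * v c))"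
    by (simp add: sum_distrib_left sum_distrib_right mult_ac)
  also have "\<dots> = (\<Sum>c\<in>UNIV. \<Sum>b\<in>UNIV. \<Sum>k\<in>UNIV. (g$k$b * g$k$c) * (u b * v c))"
    by (rule swap3)
  also have "\<dots> = (\<Sum>c\<in>UNIV. \<Sum>b\<in>UNIV. (\<Sum>k\<in>UNIV. g$k$b * g$k$c) * (u b * v c))"
    by (simp add: sum_distrib_right)
  also have "\<dots> = (\<Sum>b\<in>UNIV. u b * v b)"
    by (simp add: orth_col[OF assms] if1_mult)
  finally show ?thesis .
qed

definition A1 :: "mat3 \<Rightarrow> tensor4 \<Rightarrow> tensor4" where
  "A1 g T = (\<lambda>i j k l. \<Sum>a\<in>UNIV. g$i$a * T a j k l)"
definition A2 :: "mat3 \<Rightarrow> tensor4 \<Rightarrow> tensor4" where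
  "A2 g T = (\<lambda>i j k l. \<Sum>a\<in>UNIV. g$j$a * T i a k l)"
definition A3 :: "mat3 \<Rightarrow> tensor4 \<Rightarrow> tensor4" where
  "A3 g T = (\<lambda>i j k l. \<Sum>a\<in>UNIV. g$k$a * T i j a l)"
definition A4 :: "mat3 \<Rightarrow> tensor4 \<Rightarrow> tensor4" where
  "A4 g T = (\<lambda>i j k l. \<Sum>a\<in>UNIV. g$l$a * T i j k a)"

lemma act4_A: "act4 g T = A1 g (A2 g (A3 g (A4 g T)))"
  unfolding act4_def A1_def A2_def A3_def A4_def
  by (simp add: sum_distrib_left mult.assoc)

lemma A_comm:
  "A1 h (A2 g X) = A2 g (A1 h X)" "A1 h (A3 g X) = A3 g (A1 h X)" "A1 h (A4 g X) = A4 g (A1 h X)"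
  "A2 h (A3 g X) = A3 g (A2 h X)" "A2 h (A4 g X) = A4 g (A2 h X)" "A3 h (A4 g X) = A4 g (A3 h X)"
  unfolding A1_def A2_def A3_def A4_def by (intro ext, rule swap_mult_sum)+

lemma mm_sum: "(\<Sum>a\<in>UNIV. (g ** h :: mat3)$i$a * f a) = (\<Sum>p\<in>UNIV. g$i$p * (\<Sum>a\<in>UNIV. h$p$a * f a))"
proof -
  have "(\<Sum>a\<in>UNIV. (g ** h :: mat3)$i$a * f a) = (\<Sum>a\<in>UNIV. (\<Sum>p\<in>UNIV. g$i$p * h$p$a) * f a)"
    by (simp add: matrix_matrix_mult_def)
  also have "\<dots> = (\<Sum>a\<in>UNIV. \<Sum>p\<in>UNIV. g$i$p * (h$p$a * f a))"
    by (simp add: sum_distrib_right mult.assoc)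
  also have "\<dots> = (\<Sum>p\<in>UNIV. \<Sum>a\<in>UNIV. g$i$p * (h$p$a * f a))" by (rule sum.swap)
  also have "\<dots> = (\<Sum>p\<in>UNIV. g$i$p * (\<Sum>a\<in>UNIV. h$p$a * f a))" by (simp add: sum_distrib_left)
  finally show ?thesis .
qed

lemma A_mult:
  "A1 (g ** h) X = A1 g (A1 h X)" "A2 (g ** h) X = A2 g (A2 h X)"
  "A3 (g ** h) X = A3 g (A3 h X)" "A4 (g ** h) X = A4 g (A4 h X)"
  unfolding A1_def A2_def A3_def A4_def by (simp_all add: mm_sum)

lemma act4_mult: "act4 (g ** h) T = act4 g (act4 h T)"
  unfolding act4_A A_mult by (simp add: A_comm)

lemma act4_one: "act4 (mat 1) T = T"
  unfolding act4_A A1_def A2_def A3_def A4_def by (simp add: mat1_sum)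

lemma swap5:
  fixes F :: "'k::finite \<Rightarrow> 'm::finite \<Rightarrow> 'n::finite \<Rightarrow> 'a::finite \<Rightarrow> 'b::finite \<Rightarrow> real"
  shows "(\<Sum>k\<in>UNIV. \<Sum>m\<in>UNIV. \<Sum>n\<in>UNIV. \<Sum>a\<in>UNIV. \<Sum>b\<in>UNIV. F k m n a b)
       = (\<Sum>a\<in>UNIV. \<Sum>b\<in>UNIV. \<Sum>k\<in>UNIV. \<Sum>m\<in>UNIV. \<Sum>n\<in>UNIV. F k m n a b)"
proof -
  have "(\<Sum>k\<in>UNIV. \<Sum>m\<in>UNIV. \<Sum>n\<in>UNIV. \<Sum>a\<in>UNIV. \<Sum>b\<in>UNIV. F k m n a b)
      = (\<Sum>k\<in>UNIV. \<Sum>m\<in>UNIV. \<Sum>a\<in>UNIV. \<Sum>b\<in>UNIV. \<Sum>n\<in>UNIV. F k m n a b)"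
    by (rule sum.cong[OF refl], rule sum.cong[OF refl], rule swap3)
  also have "\<dots> = (\<Sum>k\<in>UNIV. \<Sum>a\<in>UNIV. \<Sum>b\<in>UNIV. \<Sum>m\<in>UNIV. \<Sum>n\<in>UNIV. F k m n a b)"
    by (rule sum.cong[OF refl], rule swap3)
  also have "\<dots> = (\<Sum>a\<in>UNIV. \<Sum>b\<in>UNIV. \<Sum>k\<in>UNIV. \<Sum>m\<in>UNIV. \<Sum>n\<in>UNIV. F k m n a b)"
    by (rule swap3)
  finally show ?thesis .
qed

definition B1 :: "mat3 \<Rightarrow> tensor2 \<Rightarrow> tensor2" where
  "B1 g S = (\<lambda>i j. \<Sum>a\<in>UNIV. g$i$a * S a j)"
definition B2 :: "mat3 \<Rightarrow> tensor2 \<Rightarrow> tensor2" where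
  "B2 g S = (\<lambda>i j. \<Sum>a\<in>UNIV. g$j$a * S i a)"

lemma act2_B: "act2 g S = B1 g (B2 g S)"
  unfolding act2_def B1_def B2_def
  by (simp add: sum_distrib_left mult.assoc)

lemma B_comm: "B1 h (B2 g X) = B2 g (B1 h X)"
  unfolding B1_def B2_def by (intro ext, rule swap_mult_sum)

lemma B_mult: "B1 (g ** h) X = B1 g (B1 h X)" "B2 (g ** h) X = B2 g (B2 h X)"
  unfolding B1_def B2_def by (simp_all add: mm_sum)

lemma act2_mult: "act2 (g ** h) S = act2 g (act2 h S)"
  unfolding act2_B B_mult by (simp add: B_comm)

lemma act2_one: "act2 (mat 1) S = S"
  unfolding act2_B B1_def B2_def by (simp add: mat1_sum)

lemma SO3_orth: "g \<in> SO3 \<Longrightarrow> orthogonal_matrix g" by (simp add: SO3_def)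

lemma SO3_mult: "g \<in> SO3 \<Longrightarrow> h \<in> SO3 \<Longrightarrow> g ** h \<in> SO3"
  by (simp add: SO3_def orthogonal_matrix_mul det_mul)

lemma SO3_transpose: "g \<in> SO3 \<Longrightarrow> transpose g \<in> SO3"
  by (simp add: SO3_def orthogonal_matrix_transpose det_transpose)

lemma SO3_one: "mat 1 \<in> SO3"
  by (simp add: SO3_def orthogonal_matrix_id)

lemma orth_tg: "orthogonal_matrix g \<Longrightarrow> transpose g ** g = mat 1"
  by (simp add: orthogonal_matrix_def)
lemma orth_gt: "orthogonal_matrix g \<Longrightarrow> g ** transpose g = mat 1"
  by (simp add: orthogonal_matrix_def)

lemma matrix_inv_orth:
  assumes "orthogonal_matrix (g::mat3)" shows "matrix_inv g = transpose g"
  unfolding matrix_inv_def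
proof (rule some_equality)
  show "g ** transpose g = mat 1 \<and> transpose g ** g = mat 1" using assms by (simp add: orthogonal_matrix_def)
next
  fix A assume A: "g ** A = mat 1 \<and> A ** g = mat 1"
  have "A = (transpose g ** g) ** A" using assms by (simp add: orthogonal_matrix_def matrix_mul_lid)
  also have "\<dots> = transpose g ** (g ** A)" by (simp add: matrix_mul_assoc)
  also have "\<dots> = transpose g" using A by (simp add: matrix_mul_rid)
  finally show "A = transpose g" .
qed

lemma conj_SO3:
  assumes "g \<in> SO3" shows "(\<lambda>h. g ** h ** matrix_inv g) ` SO3 = SO3"
proof -
  have mi: "matrix_inv g = transpose g" using assms SO3_orth matrix_inv_orth by blast
  have o: "orthogonal_matrix g" using assms SO3_orth by blast
  show ?thesis
  proof
    show "(\<lambda>h. g ** h ** matrix_inv g) ` SO3 \<subseteq> SO3"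
      using assms by (auto simp: mi intro!: SO3_mult SO3_transpose)
  next
    show "SO3 \<subseteq> (\<lambda>h. g ** h ** matrix_inv g) ` SO3"
    proof
      fix h assume h: "h \<in> SO3"
      have "g ** (transpose g ** h ** g) ** transpose g = (g ** transpose g) ** h ** (g ** transpose g)"
        by (simp add: matrix_mul_assoc)
      also have "\<dots> = h" by (simp add: orth_gt[OF o] matrix_mul_lid matrix_mul_rid)
      finally have "h = g ** (transpose g ** h ** g) ** transpose g" by simp
      moreover have "transpose g ** h ** g \<in> SO3" using assms h by (intro SO3_mult SO3_transpose)
      ultimately show "h \<in> (\<lambda>h. g ** h ** matrix_inv g) ` SO3" unfolding mi by blast
    qed
  qed
qed

lemma in_class_SO3: "G \<subseteq> SO3 \<Longrightarrow> in_class G SO3 \<longleftrightarrow> G = SO3"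
  unfolding in_class_def using conj_SO3 SO3_one by metis

lemma in_class_SO3': "in_class G SO3 \<longleftrightarrow> G = SO3"
  unfolding in_class_def using conj_SO3 SO3_one by metis

lemma H4_sym:
  assumes "T \<in> H4"
  shows "T a b c d = T b a c d" "T a b c d = T a c b d" "T a b c d = T a b d c"
  using assms unfolding H4_def by auto

lemma H4_tr: "T \<in> H4 \<Longrightarrow> (\<Sum>i\<in>UNIV. T i i k l) = 0"
  unfolding H4_def by auto

lemma orth_tr:
  assumes "orthogonal_matrix (g::mat3)"
  shows "(\<Sum>i\<in>UNIV. \<Sum>a\<in>UNIV. g$i$a * (\<Sum>b\<in>UNIV. g$i$b * W a b)) = (\<Sum>a\<in>UNIV. W a a)"
proof -
  have "(\<Sum>i\<in>UNIV. \<Sum>a\<in>UNIV. g$i$a * (\<Sum>b\<in>UNIV. g$i$b * W a b))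
      = (\<Sum>i\<in>UNIV. \<Sum>a\<in>UNIV. \<Sum>b\<in>UNIV. (g$i$a * g$i$b) * W a b)"
    by (simp add: sum_distrib_left mult.assoc)
  also have "\<dots> = (\<Sum>a\<in>UNIV. \<Sum>b\<in>UNIV. \<Sum>i\<in>UNIV. (g$i$a * g$i$b) * W a b)"
    by (rule swap3)
  also have "\<dots> = (\<Sum>a\<in>UNIV. \<Sum>b\<in>UNIV. (\<Sum>i\<in>UNIV. g$i$a * g$i$b) * W a b)"
    by (simp add: sum_distrib_right)
  also have "\<dots> = (\<Sum>a\<in>UNIV. W a a)"
    by (simp add: orth_col[OF assms] if1_mult)
  finally show ?thesis .
qed

lemma pull_sum:
  fixes f :: "'c::finite \<Rightarrow> real" and W :: "'a::finite \<Rightarrow> 'c \<Rightarrow> real"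
  shows "(\<Sum>a\<in>UNIV. \<Sum>c\<in>UNIV. f c * W a c) = (\<Sum>c\<in>UNIV. f c * (\<Sum>a\<in>UNIV. W a c))"
proof -
  have "(\<Sum>a\<in>UNIV. \<Sum>c\<in>UNIV. f c * W a c) = (\<Sum>c\<in>UNIV. \<Sum>a\<in>UNIV. f c * W a c)" by (rule sum.swap)
  also have "\<dots> = (\<Sum>c\<in>UNIV. f c * (\<Sum>a\<in>UNIV. W a c))" by (simp add: sum_distrib_left)
  finally show ?thesis .
qed

lemma act4_H4:
  assumes o: "orthogonal_matrix g" and T: "T \<in> H4"
  shows "act4 g T \<in> H4"
proof -
  note s = H4_sym[OF T]
  have s1: "act4 g T i j k l = act4 g T j i k l" for i j k l
  proof -
    have pw: "g$j$b * g$i$a * g$k$c * g$l$d * T b a c d = g$i$a * g$j$b * g$k$c * g$l$d * T a b c d" for a b c d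
    proof -
      have "T b a c d = T a b c d" by (rule s(1)[symmetric])
      then show ?thesis by (simp add: mult_ac)
    qed
    have "act4 g T j i k l = (\<Sum>a\<in>UNIV. \<Sum>b\<in>UNIV. \<Sum>c\<in>UNIV. \<Sum>d\<in>UNIV. g$j$a * g$i$b * g$k$c * g$l$d * T a b c d)"
      by (simp add: act4_def)
    also have "\<dots> = (\<Sum>a\<in>UNIV. \<Sum>b\<in>UNIV. \<Sum>c\<in>UNIV. \<Sum>d\<in>UNIV. g$j$b * g$i$a * g$k$c * g$l$d * T b a c d)"
      by (rule sum.swap)
    also have "\<dots> = act4 g T i j k l"
      unfolding act4_def pw ..
    finally show ?thesis by simp
  qed
  have s2: "act4 g T i j k l = act4 g T i k j l" for i j k l
  proof -
    have pw: "g$i$a * g$k$c * g$j$b * g$l$d * T a c b d = g$i$a * g$j$b * g$k$c * g$l$d * T a b c d" for a b c d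
    proof -
      have "T a c b d = T a b c d" by (rule s(2)[symmetric])
      then show ?thesis by (simp add: mult_ac)
    qed
    have "act4 g T i k j l = (\<Sum>a\<in>UNIV. \<Sum>b\<in>UNIV. \<Sum>c\<in>UNIV. \<Sum>d\<in>UNIV. g$i$a * g$k$b * g$j$c * g$l$d * T a b c d)"
      by (simp add: act4_def)
    also have "\<dots> = (\<Sum>a\<in>UNIV. \<Sum>b\<in>UNIV. \<Sum>c\<in>UNIV. \<Sum>d\<in>UNIV. g$i$a * g$k$c * g$j$b * g$l$d * T a c b d)"
      by (rule sum.cong[OF refl], rule sum.swap)
    also have "\<dots> = act4 g T i j k l"
      unfolding act4_def pw ..
    finally show ?thesis by simp
  qed
  have s3: "act4 g T i j k l = act4 g T i j l k" for i j k l
  proof -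
    have pw: "g$i$a * g$j$b * g$l$d * g$k$c * T a b d c = g$i$a * g$j$b * g$k$c * g$l$d * T a b c d" for a b c d
    proof -
      have "T a b d c = T a b c d" by (rule s(3)[symmetric])
      then show ?thesis by (simp add: mult_ac)
    qed
    have "act4 g T i j l k = (\<Sum>a\<in>UNIV. \<Sum>b\<in>UNIV. \<Sum>c\<in>UNIV. \<Sum>d\<in>UNIV. g$i$a * g$j$b * g$l$c * g$k$d * T a b c d)"
      by (simp add: act4_def)
    also have "\<dots> = (\<Sum>a\<in>UNIV. \<Sum>b\<in>UNIV. \<Sum>c\<in>UNIV. \<Sum>d\<in>UNIV. g$i$a * g$j$b * g$l$d * g$k$c * T a b d c)"
      by (rule sum.cong[OF refl], rule sum.cong[OF refl], rule sum.swap)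
    also have "\<dots> = act4 g T i j k l"
      unfolding act4_def pw ..
    finally show ?thesis by simp
  qed
  have tr: "(\<Sum>i\<in>UNIV. act4 g T i i k l) = 0" for k l
  proof -
    define Y where "Y = A3 g (A4 g T)"
    have "(\<Sum>i\<in>UNIV. act4 g T i i k l) = (\<Sum>i\<in>UNIV. \<Sum>a\<in>UNIV. g$i$a * (\<Sum>b\<in>UNIV. g$i$b * Y a b k l))"
      by (simp add: act4_A A1_def A2_def Y_def)
    also have "\<dots> = (\<Sum>a\<in>UNIV. Y a a k l)" by (rule orth_tr[OF o])
    also have "\<dots> = (\<Sum>a\<in>UNIV. \<Sum>c\<in>UNIV. g$k$c * (\<Sum>d\<in>UNIV. g$l$d * T a a c d))"
      by (simp add: Y_def A3_def A4_def)
    also have "\<dots> = (\<Sum>c\<in>UNIV. g$k$c * (\<Sum>a\<in>UNIV. \<Sum>d\<in>UNIV. g$l$d * T a a c d))"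
      by (rule pull_sum)
    also have "\<dots> = (\<Sum>c\<in>UNIV. g$k$c * (\<Sum>d\<in>UNIV. g$l$d * (\<Sum>a\<in>UNIV. T a a c d)))"
      by (simp only: pull_sum)
    also have "\<dots> = 0" using H4_tr[OF T] by simp
    finally show ?thesis .
  qed
  show ?thesis unfolding H4_def using s1 s2 s3 tr by blast
qed

section \<open>d2 equivariance\<close>

definition d2s :: "tensor4 \<Rightarrow> tensor2" where
  "d2s T = (\<lambda>i j. \<Sum>k\<in>UNIV. \<Sum>m\<in>UNIV. \<Sum>n\<in>UNIV. T i k m n * T j k m n)"

lemma H4_perm: assumes "T \<in> H4"
  shows "T k i m n = T i k m n" "T m n k j = T j k m n"
proof -
  note s = H4_sym[OF assms]
  show "T k i m n = T i k m n" using s(1) by metis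
  have "T m n k j = T m n j k" using s(3) by metis
  also have "\<dots> = T m j n k" using s(2) by metis
  also have "\<dots> = T j m n k" using s(1) by metis
  also have "\<dots> = T j m k n" using s(3) by metis
  also have "\<dots> = T j k m n" using s(2) by metis
  finally show "T m n k j = T j k m n" .
qed

lemma d2_d2s: assumes "T \<in> H4" shows "d2 T = d2s T"
proof -
  have "T k i m n * T m n k j = T i k m n * T j k m n" for i j k m n
    using H4_perm[OF assms, of k i m n] H4_perm[OF assms, of m n k j] by simp
  then show ?thesis unfolding d2_def d2s_def by simp
qed

lemma d2s_A4: "orthogonal_matrix g \<Longrightarrow> d2s (A4 g X) = d2s X"
  unfolding d2s_def A4_def by (simp add: orth_pair)

lemma d2s_A3: assumes o: "orthogonal_matrix g" shows "d2s (A3 g X) = d2s X"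
proof -
  have "(\<Sum>m\<in>UNIV. \<Sum>n\<in>UNIV. (\<Sum>c\<in>UNIV. g$m$c * X i k c n) * (\<Sum>c\<in>UNIV. g$m$c * X j k c n))
      = (\<Sum>m\<in>UNIV. \<Sum>n\<in>UNIV. X i k m n * X j k m n)" for i j k
  proof -
    have "(\<Sum>m\<in>UNIV. \<Sum>n\<in>UNIV. (\<Sum>c\<in>UNIV. g$m$c * X i k c n) * (\<Sum>c\<in>UNIV. g$m$c * X j k c n))
       = (\<Sum>n\<in>UNIV. \<Sum>m\<in>UNIV. (\<Sum>c\<in>UNIV. g$m$c * X i k c n) * (\<Sum>c\<in>UNIV. g$m$c * X j k c n))"
      by (rule sum.swap)
    also have "\<dots> = (\<Sum>n\<in>UNIV. \<Sum>m\<in>UNIV. X i k m n * X j k m n)"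
      by (simp add: orth_pair[OF o])
    also have "\<dots> = (\<Sum>m\<in>UNIV. \<Sum>n\<in>UNIV. X i k m n * X j k m n)"
      by (rule sum.swap)
    finally show ?thesis .
  qed
  then show ?thesis unfolding d2s_def A3_def by simp
qed

lemma d2s_A2: assumes o: "orthogonal_matrix g" shows "d2s (A2 g X) = d2s X"
proof -
  have "(\<Sum>k\<in>UNIV. \<Sum>m\<in>UNIV. \<Sum>n\<in>UNIV. (\<Sum>c\<in>UNIV. g$k$c * X i c m n) * (\<Sum>c\<in>UNIV. g$k$c * X j c m n))
      = (\<Sum>k\<in>UNIV. \<Sum>m\<in>UNIV. \<Sum>n\<in>UNIV. X i k m n * X j k m n)" for i j
  proof -
    have "(\<Sum>k\<in>UNIV. \<Sum>m\<in>UNIV. \<Sum>n\<in>UNIV. (\<Sum>c\<in>UNIV. g$k$c * X i c m n) * (\<Sum>c\<in>UNIV. g$k$c * X j c m n))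
       = (\<Sum>m\<in>UNIV. \<Sum>n\<in>UNIV. \<Sum>k\<in>UNIV. (\<Sum>c\<in>UNIV. g$k$c * X i c m n) * (\<Sum>c\<in>UNIV. g$k$c * X j c m n))"
      by (rule swap3)
    also have "\<dots> = (\<Sum>m\<in>UNIV. \<Sum>n\<in>UNIV. \<Sum>k\<in>UNIV. X i k m n * X j k m n)"
      by (simp add: orth_pair[OF o])
    also have "\<dots> = (\<Sum>k\<in>UNIV. \<Sum>m\<in>UNIV. \<Sum>n\<in>UNIV. X i k m n * X j k m n)"
      by (rule swap3[symmetric])
    finally show ?thesis .
  qed
  then show ?thesis unfolding d2s_def A2_def by simp
qed

lemma d2s_A1: "d2s (A1 g X) = act2 g (d2s X)"
proof -
  have "d2s (A1 g X) i j = act2 g (d2s X) i j" for i j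
  proof -
    have "d2s (A1 g X) i j = (\<Sum>k\<in>UNIV. \<Sum>m\<in>UNIV. \<Sum>n\<in>UNIV. \<Sum>b\<in>UNIV. \<Sum>a\<in>UNIV.
             g$i$a * (g$j$b * (X a k m n * X b k m n)))"
      by (simp add: d2s_def A1_def sum_distrib_left sum_distrib_right mult_ac)
    also have "\<dots> = (\<Sum>b\<in>UNIV. \<Sum>a\<in>UNIV. \<Sum>k\<in>UNIV. \<Sum>m\<in>UNIV. \<Sum>n\<in>UNIV.
             g$i$a * (g$j$b * (X a k m n * X b k m n)))"
      by (rule swap5)
    also have "\<dots> = (\<Sum>a\<in>UNIV. \<Sum>b\<in>UNIV. \<Sum>k\<in>UNIV. \<Sum>m\<in>UNIV. \<Sum>n\<in>UNIV.
             g$i$a * (g$j$b * (X a k m n * X b k m n)))"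
      by (rule sum.swap)
    also have "\<dots> = act2 g (d2s X) i j"
      by (simp add: act2_def d2s_def sum_distrib_left mult.assoc)
    finally show ?thesis .
  qed
  then show ?thesis by blast
qed

lemma d2s_act4: "orthogonal_matrix g \<Longrightarrow> d2s (act4 g T) = act2 g (d2s T)"
  by (simp add: act4_A d2s_A1 d2s_A2 d2s_A3 d2s_A4)

lemma d2_act4: "orthogonal_matrix g \<Longrightarrow> T \<in> H4 \<Longrightarrow> d2 (act4 g T) = act2 g (d2 T)"
  by (simp add: d2_d2s act4_H4 d2s_act4)

lemma polyfun_sum: "finite A \<Longrightarrow> (\<And>x. x \<in> A \<Longrightarrow> polyfun (f x)) \<Longrightarrow> polyfun (\<lambda>T. \<Sum>x\<in>A. f x T)"
proof (induction A rule: finite_induct)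
  case empty then show ?case using pf_const[of 0] by simp
next
  case (insert a A) then show ?case by (simp add: pf_add)
qed

lemma d2_sym: "T \<in> H4 \<Longrightarrow> d2 T \<in> Sym2"
  unfolding Sym2_def by (simp add: d2_d2s d2s_def mult.commute)

lemma d2_equiv: "equiv_poly_map2 d2"
  unfolding equiv_poly_map2_def
proof (intro conjI allI ballI)
  fix i j show "polyfun (\<lambda>T. d2 T i j)"
    unfolding d2_def by (intro polyfun_sum finite pf_mult pf_coord)
next
  fix T assume "T \<in> H4" then show "d2 T \<in> Sym2" by (rule d2_sym)
next
  fix g T assume "g \<in> SO3" "T \<in> H4" then show "d2 (act4 g T) = act2 g (d2 T)"
    by (simp add: d2_act4 SO3_orth)
qed



definition form4 :: "tensor4 \<Rightarrow> real^3 \<Rightarrow> real" where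
  "form4 T x = (\<Sum>a\<in>UNIV. \<Sum>b\<in>UNIV. \<Sum>c\<in>UNIV. \<Sum>d\<in>UNIV. T a b c d * x$a * x$b * x$c * x$d)"

lemma Kc:
  assumes H: "K \<in> H4"
  shows "K 1 1 2 1 = K 1 1 1 2"
    and "K 1 1 3 1 = K 1 1 1 3"
    and "K 1 1 3 2 = K 1 1 2 3"
    and "K 1 1 3 3 = -(K 1 1 1 1 + K 1 1 2 2)"
    and "K 1 2 1 1 = K 1 1 1 2"
    and "K 1 2 1 2 = K 1 1 2 2"
    and "K 1 2 1 3 = K 1 1 2 3"
    and "K 1 2 2 1 = K 1 1 2 2"
    and "K 1 2 3 1 = K 1 1 2 3"
    and "K 1 2 3 2 = K 1 2 2 3"
    and "K 1 2 3 3 = -(K 1 1 1 2 + K 1 2 2 2)"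
    and "K 1 3 1 1 = K 1 1 1 3"
    and "K 1 3 1 2 = K 1 1 2 3"
    and "K 1 3 1 3 = -(K 1 1 1 1 + K 1 1 2 2)"
    and "K 1 3 2 1 = K 1 1 2 3"
    and "K 1 3 2 2 = K 1 2 2 3"
    and "K 1 3 2 3 = -(K 1 1 1 2 + K 1 2 2 2)"
    and "K 1 3 3 1 = -(K 1 1 1 1 + K 1 1 2 2)"
    and "K 1 3 3 2 = -(K 1 1 1 2 + K 1 2 2 2)"
    and "K 1 3 3 3 = -(K 1 1 1 3 + K 1 2 2 3)"
    and "K 2 1 1 1 = K 1 1 1 2"
    and "K 2 1 1 2 = K 1 1 2 2"
    and "K 2 1 1 3 = K 1 1 2 3"
    and "K 2 1 2 1 = K 1 1 2 2"
    and "K 2 1 2 2 = K 1 2 2 2"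
    and "K 2 1 2 3 = K 1 2 2 3"
    and "K 2 1 3 1 = K 1 1 2 3"
    and "K 2 1 3 2 = K 1 2 2 3"
    and "K 2 1 3 3 = -(K 1 1 1 2 + K 1 2 2 2)"
    and "K 2 2 1 1 = K 1 1 2 2"
    and "K 2 2 1 2 = K 1 2 2 2"
    and "K 2 2 1 3 = K 1 2 2 3"
    and "K 2 2 2 1 = K 1 2 2 2"
    and "K 2 2 3 1 = K 1 2 2 3"
    and "K 2 2 3 2 = K 2 2 2 3"
    and "K 2 2 3 3 = -(K 1 1 2 2 + K 2 2 2 2)"
    and "K 2 3 1 1 = K 1 1 2 3"
    and "K 2 3 1 2 = K 1 2 2 3"
    and "K 2 3 1 3 = -(K 1 1 1 2 + K 1 2 2 2)"
    and "K 2 3 2 1 = K 1 2 2 3"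
    and "K 2 3 2 2 = K 2 2 2 3"
    and "K 2 3 2 3 = -(K 1 1 2 2 + K 2 2 2 2)"
    and "K 2 3 3 1 = -(K 1 1 1 2 + K 1 2 2 2)"
    and "K 2 3 3 2 = -(K 1 1 2 2 + K 2 2 2 2)"
    and "K 2 3 3 3 = -(K 1 1 2 3 + K 2 2 2 3)"
    and "K 3 1 1 1 = K 1 1 1 3"
    and "K 3 1 1 2 = K 1 1 2 3"
    and "K 3 1 1 3 = -(K 1 1 1 1 + K 1 1 2 2)"
    and "K 3 1 2 1 = K 1 1 2 3"
    and "K 3 1 2 2 = K 1 2 2 3"
    and "K 3 1 2 3 = -(K 1 1 1 2 + K 1 2 2 2)"
    and "K 3 1 3 1 = -(K 1 1 1 1 + K 1 1 2 2)"
    and "K 3 1 3 2 = -(K 1 1 1 2 + K 1 2 2 2)"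
    and "K 3 1 3 3 = -(K 1 1 1 3 + K 1 2 2 3)"
    and "K 3 2 1 1 = K 1 1 2 3"
    and "K 3 2 1 2 = K 1 2 2 3"
    and "K 3 2 1 3 = -(K 1 1 1 2 + K 1 2 2 2)"
    and "K 3 2 2 1 = K 1 2 2 3"
    and "K 3 2 2 2 = K 2 2 2 3"
    and "K 3 2 2 3 = -(K 1 1 2 2 + K 2 2 2 2)"
    and "K 3 2 3 1 = -(K 1 1 1 2 + K 1 2 2 2)"
    and "K 3 2 3 2 = -(K 1 1 2 2 + K 2 2 2 2)"
    and "K 3 2 3 3 = -(K 1 1 2 3 + K 2 2 2 3)"
    and "K 3 3 1 1 = -(K 1 1 1 1 + K 1 1 2 2)"
    and "K 3 3 1 2 = -(K 1 1 1 2 + K 1 2 2 2)"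
    and "K 3 3 1 3 = -(K 1 1 1 3 + K 1 2 2 3)"
    and "K 3 3 2 1 = -(K 1 1 1 2 + K 1 2 2 2)"
    and "K 3 3 2 2 = -(K 1 1 2 2 + K 2 2 2 2)"
    and "K 3 3 2 3 = -(K 1 1 2 3 + K 2 2 2 3)"
    and "K 3 3 3 1 = -(K 1 1 1 3 + K 1 2 2 3)"
    and "K 3 3 3 2 = -(K 1 1 2 3 + K 2 2 2 3)"
    and "K 3 3 3 3 = K 1 1 1 1 + 2 * K 1 1 2 2 + K 2 2 2 2"
proof -
  note s1 = H4_sym(1)[OF H] and s2 = H4_sym(2)[OF H] and s3 = H4_sym(3)[OF H]
  have tr: "K 1 1 k l + K 2 2 k l + K 3 3 k l = 0" for k l using H4_tr[OF H, of k l] by (simp add: sum_3)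
  show "K 1 1 2 1 = K 1 1 1 2" using s3[of 1 1 2 1] by linarith
  show "K 1 1 3 1 = K 1 1 1 3" using s3[of 1 1 3 1] by linarith
  show "K 1 1 3 2 = K 1 1 2 3" using s3[of 1 1 3 2] by linarith
  show "K 1 1 3 3 = -(K 1 1 1 1 + K 1 1 2 2)" using s1[of 2 1 1 2] s1[of 3 1 1 3] s2[of 1 2 1 2] s2[of 1 3 1 3] s2[of 2 2 1 1] s2[of 3 3 1 1] s3[of 2 1 2 1] s3[of 3 1 3 1] tr[of 1 1] by linarith
  show "K 1 2 1 1 = K 1 1 1 2" using s2[of 1 2 1 1] s3[of 1 1 2 1] by linarith
  show "K 1 2 1 2 = K 1 1 2 2" using s2[of 1 2 1 2] by linarith
  show "K 1 2 1 3 = K 1 1 2 3" using s2[of 1 2 1 3] by linarith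
  show "K 1 2 2 1 = K 1 1 2 2" using s2[of 1 2 1 2] s3[of 1 2 2 1] by linarith
  show "K 1 2 3 1 = K 1 1 2 3" using s2[of 1 2 1 3] s3[of 1 2 3 1] by linarith
  show "K 1 2 3 2 = K 1 2 2 3" using s3[of 1 2 3 2] by linarith
  show "K 1 2 3 3 = -(K 1 1 1 2 + K 1 2 2 2)" using s1[of 2 1 2 2] s1[of 3 1 2 3] s2[of 1 3 2 3] s2[of 2 2 1 2] s2[of 3 3 1 2] s3[of 3 1 3 2] tr[of 1 2] by linarith
  show "K 1 3 1 1 = K 1 1 1 3" using s2[of 1 3 1 1] s3[of 1 1 3 1] by linarith
  show "K 1 3 1 2 = K 1 1 2 3" using s2[of 1 3 1 2] s3[of 1 1 3 2] by linarith
  show "K 1 3 1 3 = -(K 1 1 1 1 + K 1 1 2 2)" using s1[of 2 1 1 2] s1[of 3 1 1 3] s2[of 1 2 1 2] s2[of 1 3 1 3] s2[of 2 2 1 1] s2[of 3 3 1 1] s3[of 2 1 2 1] s3[of 3 1 3 1] tr[of 1 1] by linarith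
  show "K 1 3 2 1 = K 1 1 2 3" using s2[of 1 2 1 3] s2[of 1 3 2 1] s3[of 1 2 3 1] by linarith
  show "K 1 3 2 2 = K 1 2 2 3" using s2[of 1 3 2 2] s3[of 1 2 3 2] by linarith
  show "K 1 3 2 3 = -(K 1 1 1 2 + K 1 2 2 2)" using s1[of 2 1 2 2] s1[of 3 1 2 3] s2[of 1 3 2 3] s2[of 2 2 1 2] s2[of 3 3 1 2] s3[of 3 1 3 2] tr[of 1 2] by linarith
  show "K 1 3 3 1 = -(K 1 1 1 1 + K 1 1 2 2)" using s1[of 2 1 1 2] s1[of 3 1 1 3] s2[of 1 2 1 2] s2[of 1 3 1 3] s2[of 2 2 1 1] s2[of 3 3 1 1] s3[of 1 3 3 1] s3[of 2 1 2 1] s3[of 3 1 3 1] tr[of 1 1] by linarith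
  show "K 1 3 3 2 = -(K 1 1 1 2 + K 1 2 2 2)" using s1[of 2 1 2 2] s1[of 3 1 2 3] s2[of 1 3 2 3] s2[of 2 2 1 2] s2[of 3 3 1 2] s3[of 1 3 3 2] s3[of 3 1 3 2] tr[of 1 2] by linarith
  show "K 1 3 3 3 = -(K 1 1 1 3 + K 1 2 2 3)" using s1[of 2 1 2 3] s1[of 3 1 3 3] s2[of 2 2 1 3] s2[of 3 3 1 3] tr[of 1 3] by linarith
  show "K 2 1 1 1 = K 1 1 1 2" using s1[of 2 1 1 1] s2[of 1 2 1 1] s3[of 1 1 2 1] by linarith
  show "K 2 1 1 2 = K 1 1 2 2" using s1[of 2 1 1 2] s2[of 1 2 1 2] by linarith
  show "K 2 1 1 3 = K 1 1 2 3" using s1[of 2 1 1 3] s2[of 1 2 1 3] by linarith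
  show "K 2 1 2 1 = K 1 1 2 2" using s1[of 2 1 2 1] s2[of 1 2 1 2] s3[of 1 2 2 1] by linarith
  show "K 2 1 2 2 = K 1 2 2 2" using s1[of 2 1 2 2] by linarith
  show "K 2 1 2 3 = K 1 2 2 3" using s1[of 2 1 2 3] by linarith
  show "K 2 1 3 1 = K 1 1 2 3" using s1[of 2 1 3 1] s2[of 1 2 1 3] s3[of 1 2 3 1] by linarith
  show "K 2 1 3 2 = K 1 2 2 3" using s1[of 2 1 3 2] s3[of 1 2 3 2] by linarith
  show "K 2 1 3 3 = -(K 1 1 1 2 + K 1 2 2 2)" using s1[of 2 1 2 2] s1[of 2 1 3 3] s1[of 3 1 2 3] s2[of 1 3 2 3] s2[of 2 2 1 2] s2[of 3 3 1 2] s3[of 3 1 3 2] tr[of 1 2] by linarith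
  show "K 2 2 1 1 = K 1 1 2 2" using s1[of 2 1 1 2] s2[of 1 2 1 2] s2[of 2 2 1 1] s3[of 2 1 2 1] by linarith
  show "K 2 2 1 2 = K 1 2 2 2" using s1[of 2 1 2 2] s2[of 2 2 1 2] by linarith
  show "K 2 2 1 3 = K 1 2 2 3" using s1[of 2 1 2 3] s2[of 2 2 1 3] by linarith
  show "K 2 2 2 1 = K 1 2 2 2" using s1[of 2 1 2 2] s2[of 2 2 1 2] s3[of 2 2 2 1] by linarith
  show "K 2 2 3 1 = K 1 2 2 3" using s1[of 2 1 2 3] s2[of 2 2 1 3] s3[of 2 2 3 1] by linarith
  show "K 2 2 3 2 = K 2 2 2 3" using s3[of 2 2 3 2] by linarith
  show "K 2 2 3 3 = -(K 1 1 2 2 + K 2 2 2 2)" using s1[of 3 2 2 3] s2[of 2 3 2 3] s2[of 3 3 2 2] s3[of 3 2 3 2] tr[of 2 2] by linarith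
  show "K 2 3 1 1 = K 1 1 2 3" using s1[of 2 1 1 3] s2[of 1 2 1 3] s2[of 2 3 1 1] s3[of 2 1 3 1] by linarith
  show "K 2 3 1 2 = K 1 2 2 3" using s1[of 2 1 2 3] s2[of 2 3 1 2] s3[of 2 1 3 2] by linarith
  show "K 2 3 1 3 = -(K 1 1 1 2 + K 1 2 2 2)" using s1[of 2 1 2 2] s1[of 2 1 3 3] s1[of 3 1 2 3] s2[of 1 3 2 3] s2[of 2 2 1 2] s2[of 2 3 1 3] s2[of 3 3 1 2] s3[of 3 1 3 2] tr[of 1 2] by linarith
  show "K 2 3 2 1 = K 1 2 2 3" using s1[of 2 1 2 3] s2[of 2 2 1 3] s2[of 2 3 2 1] s3[of 2 2 3 1] by linarith
  show "K 2 3 2 2 = K 2 2 2 3" using s2[of 2 3 2 2] s3[of 2 2 3 2] by linarith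
  show "K 2 3 2 3 = -(K 1 1 2 2 + K 2 2 2 2)" using s1[of 3 2 2 3] s2[of 2 3 2 3] s2[of 3 3 2 2] s3[of 3 2 3 2] tr[of 2 2] by linarith
  show "K 2 3 3 1 = -(K 1 1 1 2 + K 1 2 2 2)" using s1[of 2 1 2 2] s1[of 2 1 3 3] s1[of 3 1 2 3] s2[of 1 3 2 3] s2[of 2 2 1 2] s2[of 2 3 1 3] s2[of 3 3 1 2] s3[of 2 3 3 1] s3[of 3 1 3 2] tr[of 1 2] by linarith
  show "K 2 3 3 2 = -(K 1 1 2 2 + K 2 2 2 2)" using s1[of 3 2 2 3] s2[of 2 3 2 3] s2[of 3 3 2 2] s3[of 2 3 3 2] s3[of 3 2 3 2] tr[of 2 2] by linarith
  show "K 2 3 3 3 = -(K 1 1 2 3 + K 2 2 2 3)" using s1[of 3 2 3 3] s2[of 3 3 2 3] tr[of 2 3] by linarith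
  show "K 3 1 1 1 = K 1 1 1 3" using s1[of 3 1 1 1] s2[of 1 3 1 1] s3[of 1 1 3 1] by linarith
  show "K 3 1 1 2 = K 1 1 2 3" using s1[of 3 1 1 2] s2[of 1 3 1 2] s3[of 1 1 3 2] by linarith
  show "K 3 1 1 3 = -(K 1 1 1 1 + K 1 1 2 2)" using s1[of 2 1 1 2] s1[of 3 1 1 3] s2[of 1 2 1 2] s2[of 1 3 1 3] s2[of 2 2 1 1] s2[of 3 3 1 1] s3[of 2 1 2 1] s3[of 3 1 3 1] tr[of 1 1] by linarith
  show "K 3 1 2 1 = K 1 1 2 3" using s1[of 3 1 2 1] s2[of 1 2 1 3] s2[of 1 3 2 1] s3[of 1 2 3 1] by linarith
  show "K 3 1 2 2 = K 1 2 2 3" using s1[of 3 1 2 2] s2[of 1 3 2 2] s3[of 1 2 3 2] by linarith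
  show "K 3 1 2 3 = -(K 1 1 1 2 + K 1 2 2 2)" using s1[of 2 1 2 2] s1[of 3 1 2 3] s2[of 1 3 2 3] s2[of 2 2 1 2] s2[of 3 3 1 2] s3[of 3 1 3 2] tr[of 1 2] by linarith
  show "K 3 1 3 1 = -(K 1 1 1 1 + K 1 1 2 2)" using s1[of 2 1 1 2] s1[of 3 1 1 3] s1[of 3 1 3 1] s2[of 1 2 1 2] s2[of 1 3 1 3] s2[of 2 2 1 1] s2[of 3 3 1 1] s3[of 1 3 3 1] s3[of 2 1 2 1] s3[of 3 1 3 1] tr[of 1 1] by linarith
  show "K 3 1 3 2 = -(K 1 1 1 2 + K 1 2 2 2)" using s1[of 2 1 2 2] s1[of 3 1 2 3] s1[of 3 1 3 2] s2[of 1 3 2 3] s2[of 2 2 1 2] s2[of 3 3 1 2] s3[of 1 3 3 2] s3[of 3 1 3 2] tr[of 1 2] by linarith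
  show "K 3 1 3 3 = -(K 1 1 1 3 + K 1 2 2 3)" using s1[of 2 1 2 3] s1[of 3 1 3 3] s2[of 2 2 1 3] s2[of 3 3 1 3] tr[of 1 3] by linarith
  show "K 3 2 1 1 = K 1 1 2 3" using s1[of 2 1 1 3] s1[of 3 2 1 1] s2[of 1 2 1 3] s2[of 2 3 1 1] s3[of 2 1 3 1] by linarith
  show "K 3 2 1 2 = K 1 2 2 3" using s1[of 2 1 2 3] s1[of 3 2 1 2] s2[of 2 3 1 2] s3[of 2 1 3 2] by linarith
  show "K 3 2 1 3 = -(K 1 1 1 2 + K 1 2 2 2)" using s1[of 2 1 2 2] s1[of 2 1 3 3] s1[of 3 1 2 3] s1[of 3 2 1 3] s2[of 1 3 2 3] s2[of 2 2 1 2] s2[of 2 3 1 3] s2[of 3 3 1 2] s3[of 3 1 3 2] tr[of 1 2] by linarith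
  show "K 3 2 2 1 = K 1 2 2 3" using s1[of 2 1 2 3] s1[of 3 2 2 1] s2[of 2 2 1 3] s2[of 2 3 2 1] s3[of 2 2 3 1] by linarith
  show "K 3 2 2 2 = K 2 2 2 3" using s1[of 3 2 2 2] s2[of 2 3 2 2] s3[of 2 2 3 2] by linarith
  show "K 3 2 2 3 = -(K 1 1 2 2 + K 2 2 2 2)" using s1[of 3 2 2 3] s2[of 2 3 2 3] s2[of 3 3 2 2] s3[of 3 2 3 2] tr[of 2 2] by linarith
  show "K 3 2 3 1 = -(K 1 1 1 2 + K 1 2 2 2)" using s1[of 2 1 2 2] s1[of 2 1 3 3] s1[of 3 1 2 3] s1[of 3 2 3 1] s2[of 1 3 2 3] s2[of 2 2 1 2] s2[of 2 3 1 3] s2[of 3 3 1 2] s3[of 2 3 3 1] s3[of 3 1 3 2] tr[of 1 2] by linarith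
  show "K 3 2 3 2 = -(K 1 1 2 2 + K 2 2 2 2)" using s1[of 3 2 2 3] s1[of 3 2 3 2] s2[of 2 3 2 3] s2[of 3 3 2 2] s3[of 2 3 3 2] s3[of 3 2 3 2] tr[of 2 2] by linarith
  show "K 3 2 3 3 = -(K 1 1 2 3 + K 2 2 2 3)" using s1[of 3 2 3 3] s2[of 3 3 2 3] tr[of 2 3] by linarith
  show "K 3 3 1 1 = -(K 1 1 1 1 + K 1 1 2 2)" using s1[of 2 1 1 2] s1[of 3 1 1 3] s2[of 1 2 1 2] s2[of 1 3 1 3] s2[of 2 2 1 1] s2[of 3 3 1 1] s3[of 2 1 2 1] s3[of 3 1 3 1] tr[of 1 1] by linarith
  show "K 3 3 1 2 = -(K 1 1 1 2 + K 1 2 2 2)" using s1[of 2 1 2 2] s1[of 3 1 2 3] s2[of 1 3 2 3] s2[of 2 2 1 2] s2[of 3 3 1 2] s3[of 3 1 3 2] tr[of 1 2] by linarith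
  show "K 3 3 1 3 = -(K 1 1 1 3 + K 1 2 2 3)" using s1[of 2 1 2 3] s1[of 3 1 3 3] s2[of 2 2 1 3] s2[of 3 3 1 3] tr[of 1 3] by linarith
  show "K 3 3 2 1 = -(K 1 1 1 2 + K 1 2 2 2)" using s1[of 2 1 2 2] s1[of 2 1 3 3] s1[of 3 1 2 3] s1[of 3 2 1 3] s2[of 1 3 2 3] s2[of 2 2 1 2] s2[of 2 3 1 3] s2[of 3 3 1 2] s2[of 3 3 2 1] s3[of 3 1 3 2] s3[of 3 2 3 1] tr[of 1 2] by linarith
  show "K 3 3 2 2 = -(K 1 1 2 2 + K 2 2 2 2)" using s1[of 3 2 2 3] s2[of 2 3 2 3] s2[of 3 3 2 2] s3[of 3 2 3 2] tr[of 2 2] by linarith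
  show "K 3 3 2 3 = -(K 1 1 2 3 + K 2 2 2 3)" using s1[of 3 2 3 3] s2[of 3 3 2 3] tr[of 2 3] by linarith
  show "K 3 3 3 1 = -(K 1 1 1 3 + K 1 2 2 3)" using s1[of 2 1 2 3] s1[of 3 1 3 3] s2[of 2 2 1 3] s2[of 3 3 1 3] s3[of 3 3 3 1] tr[of 1 3] by linarith
  show "K 3 3 3 2 = -(K 1 1 2 3 + K 2 2 2 3)" using s1[of 3 2 3 3] s2[of 3 3 2 3] s3[of 3 3 3 2] tr[of 2 3] by linarith
  show "K 3 3 3 3 = K 1 1 1 1 + 2 * K 1 1 2 2 + K 2 2 2 2" using s1[of 2 1 1 2] s1[of 3 1 1 3] s1[of 3 2 2 3] s2[of 1 2 1 2] s2[of 1 3 1 3] s2[of 2 2 1 1] s2[of 2 3 2 3] s2[of 3 3 1 1] s2[of 3 3 2 2] s3[of 2 1 2 1] s3[of 3 1 3 1] s3[of 3 2 3 2] tr[of 1 1] tr[of 2 2] tr[of 3 3] by linarith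
qed

definition fpoly :: "real \<Rightarrow> real \<Rightarrow> real \<Rightarrow> real \<Rightarrow> real \<Rightarrow> real \<Rightarrow> real \<Rightarrow> real \<Rightarrow> real \<Rightarrow> real \<Rightarrow> real \<Rightarrow> real \<Rightarrow> real" where
  "fpoly a1 a2 a3 a4 a5 b1 b2 b3 b4 x y z =
     a1*x^4 + 4*a2*x^3*y + 6*a3*x^2*y^2 + 4*a4*x*y^3 + a5*y^4
   + 4*b1*x^3*z + 12*b2*x^2*y*z + 12*b3*x*y^2*z + 4*b4*y^3*z
   - 6*(a1+a3)*x^2*z^2 - 12*(a2+a4)*x*y*z^2 - 6*(a3+a5)*y^2*z^2
   - 4*(b1+b3)*x*z^3 - 4*(b2+b4)*y*z^3 + (a1+2*a3+a5)*z^4"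

lemma form4_expand:
  assumes H: "K \<in> H4"
  shows "form4 K x = fpoly (K 1 1 1 1) (K 1 1 1 2) (K 1 1 2 2) (K 1 2 2 2) (K 2 2 2 2)
                           (K 1 1 1 3) (K 1 1 2 3) (K 1 2 2 3) (K 2 2 2 3) (x$1) (x$2) (x$3)"
  unfolding form4_def fpoly_def
  by (simp add: sum_3 Kc[OF H] power2_eq_square power3_eq_cube power4_eq_xxxx algebra_simps)

lemma deriv_lemma:
  fixes c0 c1 c2 c3 c4 :: real
  assumes "\<And>t. (c0 + c1*t + c2*t^2 + c3*t^3 + c4*t^4)^2 \<le> c0^2 * (1+t^2)^4"
  shows "c0 * c1 = 0"
proof -
  define f where "f t = c0^2 * (1+t^2)^4 - (c0 + c1*t + c2*t^2 + c3*t^3 + c4*t^4)^2" for t :: real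
  have min: "\<forall>y. (abs (0 - y)) < 1 \<longrightarrow> f 0 \<le> f y" using assms by (simp add: f_def)
  have "DERIV f 0 :> -(2*c0*c1)"
    unfolding f_def by (auto intro!: derivative_eq_intros)
  from DERIV_local_min[OF this _ min] show ?thesis by simp
qed

lemma lmax:
  fixes u v Bd :: real
  assumes "(u+v)^2 \<le> Bd" "(u-v)^2 \<le> Bd"
  shows "u^2 + v^2 + 2 * (abs (u * v)) \<le> Bd"
proof (cases "u * v \<ge> 0")
  case True
  then have "(abs (u * v)) = u * v" by simp
  with assms(1) show ?thesis by (simp add: power2_sum)
next
  case False
  then have "(abs (u * v)) = -(u * v)" by simp
  with assms(2) show ?thesis by (simp add: power2_diff)
qed

lemma lb:
  fixes a b c :: real
  assumes "0 \<le> c" "c^2 * a^2 \<le> b^2"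
  shows "c * a^2 \<le> (abs (a*b))"
proof -
  have "(c*(abs (a)))^2 \<le> (abs (b))^2" using assms by (simp add: power_mult_distrib)
  then have "c*(abs (a)) \<le> (abs (b))" by (rule power2_le_imp_le) simp
  then have "(abs (a)) * (c*(abs (a))) \<le> (abs (a)) * (abs (b))" by (rule mult_left_mono) simp
  then show ?thesis by (simp add: abs_mult power2_eq_square mult_ac)
qed

lemma sq0: "(x::real)^2 \<le> 0 \<Longrightarrow> x = 0" by (metis power2_less_eq_zero_iff)

lemma core_alg:
  fixes a1 a2 a3 a4 a5 b1 b2 b3 b4 :: real
  assumes P1: "\<And>x y z. (fpoly a1 a2 a3 a4 a5 b1 b2 b3 b4 x y z)^2 \<le> (a1+2*a3+a5)^2 * (x^2+y^2+z^2)^4"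
    and P2: "\<And>x y. (fpoly a1 a2 a3 a4 a5 b1 b2 b3 b4 x y 0)^2 \<le> a1^2 * (x^2+y^2)^4"
    and E12: "4*a1*a2 + 3*a1*a4 + 9*a2*a3 + 3*a2*a5 + 9*a3*a4 + 4*a4*a5 + 4*b1*b2 + b1*b4 + 7*b2*b3 + 4*b3*b4 = 0"
    and E13: "2*a1*b3 + 3*a2*b4 - 2*a3*b1 + a3*b3 - 3*a4*b2 + 4*a4*b4 - a5*b1 - 4*a5*b3 = 0"
    and E23: "-4*a1*b2 - a1*b4 + 4*a2*b1 - 3*a2*b3 + a3*b2 - 2*a3*b4 + 3*a4*b1 + 2*a5*b2 = 0"
    and F1: "4*a1^2 + 6*a1*a3 + 2*a2^2 - 6*a3*a5 - 2*a4^2 - 4*a5^2 + 4*b1^2 + 2*b1*b3 + 2*b2^2 - 2*b2*b4 - 2*b3^2 - 4*b4^2 = 0"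
    and F2: "-4*a1*a3 - 2*a1*a5 - 6*a2*a4 - 4*a3^2 - 10*a3*a5 - 2*a4^2 - 4*a5^2 - 4*b1*b3 - 6*b2*b4 - 2*b3^2 - 4*b4^2 = 0"
  shows "a2 = 0 \<and> a4 = 0 \<and> b1 = 0 \<and> b2 = 0 \<and> b3 = 0 \<and> b4 = 0 \<and> a5 = a1 \<and> 2*a3 = -a1"
proof -
  let ?f = "fpoly a1 a2 a3 a4 a5 b1 b2 b3 b4"
  define c0 where "c0 = a1+2*a3+a5"
  show ?thesis
  proof (cases "c0 = 0")
    case True
    have z: "?f x y z = 0" for x y z using P1[of x y z] True by (simp add: c0_def)
    have "a1 = 0" "a2 = 0" "a3 = 0" "a4 = 0" "a5 = 0" "b1 = 0" "b2 = 0" "b3 = 0" "b4 = 0"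
      using z[of 1 0 0] z[of 0 1 0] z[of 1 1 0] z[of 1 "-1" 0] z[of 1 2 0]
        z[of 1 0 1] z[of 1 0 "-1"] z[of 2 0 1] z[of 2 0 "-1"]
        z[of 0 1 1] z[of 0 1 "-1"] z[of 0 2 1] z[of 0 2 "-1"]
      by (simp_all add: fpoly_def)
    then show ?thesis by simp
  next
    case c0nz: False
    show ?thesis
    proof (cases "a1 = 0")
      case True
      have z: "?f x y 0 = 0" for x y using P2[of x y] True by simp
      have "a1 = 0" "a3 = 0" "a5 = 0"
        using z[of 1 0] z[of 0 1] z[of 1 1] z[of 1 "-1"] z[of 1 2]
        by (simp_all add: fpoly_def)
      then have "c0 = 0" by (simp add: c0_def)
      with c0nz show ?thesis by simp
    next
      case a1nz: False
      have d1: "c0 * (-4*(b1+b3)) = 0"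
      proof (rule deriv_lemma[of c0 "-4*(b1+b3)" "-6*(a1+a3)" "4*b1" a1])
        fix t :: real
        have "?f t 0 1 = c0 + (-4*(b1+b3))*t + (-6*(a1+a3))*t^2 + (4*b1)*t^3 + a1*t^4"
          by (simp add: fpoly_def c0_def algebra_simps)
        moreover have "(t^2 + 0^2 + 1^2) = 1 + t^2" by simp
        ultimately show "(c0 + (-4*(b1+b3))*t + (-6*(a1+a3))*t^2 + (4*b1)*t^3 + a1*t^4)^2 \<le> c0^2 * (1+t^2)^4"
          using P1[of t 0 1] by (simp add: c0_def add.commute)
      qed
      have d2: "c0 * (-4*(b2+b4)) = 0"
      proof (rule deriv_lemma[of c0 "-4*(b2+b4)" "-6*(a3+a5)" "4*b4" a5])
        fix t :: real
        have "?f 0 t 1 = c0 + (-4*(b2+b4))*t + (-6*(a3+a5))*t^2 + (4*b4)*t^3 + a5*t^4"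
          by (simp add: fpoly_def c0_def algebra_simps)
        moreover have "(0^2 + t^2 + 1^2) = 1 + t^2" by simp
        ultimately show "(c0 + (-4*(b2+b4))*t + (-6*(a3+a5))*t^2 + (4*b4)*t^3 + a5*t^4)^2 \<le> c0^2 * (1+t^2)^4"
          using P1[of 0 t 1] by (simp add: c0_def add.commute)
      qed
      have d3: "a1 * (4*a2) = 0"
      proof (rule deriv_lemma[of a1 "4*a2" "6*a3" "4*a4" a5])
        fix t :: real
        have "?f 1 t 0 = a1 + (4*a2)*t + (6*a3)*t^2 + (4*a4)*t^3 + a5*t^4"
          by (simp add: fpoly_def algebra_simps)
        then show "(a1 + (4*a2)*t + (6*a3)*t^2 + (4*a4)*t^3 + a5*t^4)^2 \<le> a1^2 * (1+t^2)^4"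
          using P2[of 1 t] by simp
      qed
      have b3e: "b3 = -b1" using d1 c0nz by simp
      have b4e: "b4 = -b2" using d2 c0nz by simp
      have a2z: "a2 = 0" using d3 a1nz by simp
      have e12: "a4*(3*a1+9*a3+4*a5) = 0" using E12 b3e b4e a2z by algebra
      have e13: "-2*a1*b1 - 3*a3*b1 - 7*a4*b2 + 3*a5*b1 = 0" using E13 b3e b4e a2z by algebra
      have e23: "-3*a1*b2 + 3*a3*b2 + 3*a4*b1 + 2*a5*b2 = 0" using E23 b3e b4e a2z by algebra
      have f1: "4*a1^2 + 6*a1*a3 - 6*a3*a5 - 2*a4^2 - 4*a5^2 = 0" using F1 b3e b4e a2z by algebra
      have f2: "-4*a1*a3 - 2*a1*a5 - 4*a3^2 - 10*a3*a5 - 2*a4^2 - 4*a5^2 + 2*b1^2 + 2*b2^2 = 0"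
        using F2 b3e b4e a2z by algebra
      have P1': "(?f x y z)^2 \<le> c0^2 * (x^2+y^2+z^2)^4" for x y z using P1[of x y z] by (simp add: c0_def)
      have fv: "?f x y z = a1*x^4 + 6*a3*x^2*y^2 + 4*a4*x*y^3 + a5*y^4
          + 4*b1*x^3*z + 12*b2*x^2*y*z - 12*b1*x*y^2*z - 4*b2*y^3*z
          - 6*(a1+a3)*x^2*z^2 - 12*a4*x*y*z^2 - 6*(a3+a5)*y^2*z^2 + c0*z^4" for x y z
        by (simp add: fpoly_def b3e b4e a2z c0_def)
      show ?thesis
      proof (cases "a4 = 0")
        case a4z: True
        have "(a1 - a5)*(4*a1 + 4*a5 + 6*a3) = 0" using f1 a4z by algebra
        then consider (A1) "a5 = a1" | (A2) "4*a1 + 4*a5 + 6*a3 = 0" by force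
        then show ?thesis
        proof cases
          case A1
          have g1: "b1*(a1 - 3*a3) = 0" using e13 a4z A1 by algebra
          have g2: "b2*(a1 - 3*a3) = 0" using e23 a4z A1 by algebra
          have g3: "b1^2 + b2^2 = (3*a1+a3)*(a1+2*a3)" using f2 a4z A1 by algebra
          show ?thesis
          proof (cases "a1 = 3*a3")
            case True
            have c0e: "c0 = 8*a3" using A1 True by (simp add: c0_def)
            have bb: "b1^2 + b2^2 = 50*a3^2" using g3 True by algebra
            have a3nz: "a3 \<noteq> 0" using a1nz True by simp
            have v5: "?f 1 0 1 = -13*a3 + 4*b1" unfolding fv apply simp using A1 True c0e a4z by linarith
            have v6: "?f (-1) 0 1 = -13*a3 - 4*b1" unfolding fv apply simp using A1 True c0e a4z by linarith
            have v7: "?f 0 1 1 = -13*a3 - 4*b2" unfolding fv apply simp using A1 True c0e a4z by linarith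
            have v8: "?f 0 (-1) 1 = -13*a3 + 4*b2" unfolding fv apply simp using A1 True c0e a4z by linarith
            have T5: "(-13*a3 + 4*b1)^2 \<le> 1024*a3^2" using P1'[of 1 0 1] v5 c0e by (simp add: power_mult_distrib)
            have T6: "(-13*a3 - 4*b1)^2 \<le> 1024*a3^2" using P1'[of "-1" 0 1] v6 c0e by (simp add: power_mult_distrib)
            have T7: "(-13*a3 - 4*b2)^2 \<le> 1024*a3^2" using P1'[of 0 1 1] v7 c0e by (simp add: power_mult_distrib)
            have T8: "(-13*a3 + 4*b2)^2 \<le> 1024*a3^2" using P1'[of 0 "-1" 1] v8 c0e by (simp add: power_mult_distrib)
            have L1: "(-13*a3)^2 + (4*b1)^2 + 2 * (abs ((-13*a3)*(4*b1))) \<le> 1024*a3^2"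
              using lmax[of "-13*a3" "4*b1"] T5 T6 by simp
            have L2: "(-13*a3)^2 + (4*b2)^2 + 2 * (abs ((-13*a3)*(4*b2))) \<le> 1024*a3^2"
              using lmax[of "-13*a3" "4*b2"] T7 T8 by simp
            have "25*a3^2 \<le> b1^2 \<or> 25*a3^2 \<le> b2^2" using bb by linarith
            then have "a3^2 \<le> 0"
            proof
              assume h: "25*a3^2 \<le> b1^2"
              have q1: "5*a3^2 \<le> (abs (a3*b1))" using lb[of 5 a3 b1] h by simp
              have "(abs ((-13*a3)*(4*b1))) = 52 * (abs (a3*b1))" by (simp add: abs_mult)
              then have q2: "169*a3^2 + 16*b1^2 + 104*(abs (a3*b1)) \<le> 1024*a3^2" using L1 by (simp add: power_mult_distrib)
              show ?thesis using q1 q2 h by linarith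
            next
              assume h: "25*a3^2 \<le> b2^2"
              have q1: "5*a3^2 \<le> (abs (a3*b2))" using lb[of 5 a3 b2] h by simp
              have "(abs ((-13*a3)*(4*b2))) = 52 * (abs (a3*b2))" by (simp add: abs_mult)
              then have q2: "169*a3^2 + 16*b2^2 + 104*(abs (a3*b2)) \<le> 1024*a3^2" using L2 by (simp add: power_mult_distrib)
              show ?thesis using q1 q2 h by linarith
            qed
            then have "a3 = 0" by (rule sq0)
            with a3nz show ?thesis by simp
          next
            case False
            have b1z: "b1 = 0" using g1 False by simp
            have b2z: "b2 = 0" using g2 False by simp
            have "(3*a1+a3)*(a1+2*a3) = 0" using g3 b1z b2z by simp
            then consider "a3 = -3*a1" | "a1 = -2*a3" by force
            then show ?thesis
            proof cases
              case 1
              have "?f 1 1 0 = -16*a1" unfolding fv apply simp using 1 A1 a4z b1z b2z by linarith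
              then have "(-16*a1)^2 \<le> 16*a1^2" using P2[of 1 1] by simp
              then have "a1^2 \<le> 0" by (simp add: power_mult_distrib)
              then have "a1 = 0" by (rule sq0)
              with a1nz show ?thesis by simp
            next
              case 2
              then show ?thesis using a2z a4z b1z b2z b3e b4e A1 by simp
            qed
          qed
        next
          case A2
          have h1: "5*a5*b1 = 0" using e13 a4z A2 by algebra
          have h2: "5*a1*b2 = 0" using e23 a4z A2 by algebra
          have b2z: "b2 = 0" using h2 a1nz by simp
          have h3: "18*b1^2 = -(8*a1^2 + 34*a1*a5 + 8*a5^2)" using f2 a4z A2 b2z by algebra
          have b1z: "b1 = 0"
          proof (rule ccontr)
            assume "b1 \<noteq> 0"
            then have "a5 = 0" using h1 by simp
            then have "18*b1^2 + 8*a1^2 = 0" using h3 by simp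
            moreover have "0 \<le> b1^2" "0 \<le> a1^2" by simp_all
            ultimately have "a1^2 \<le> 0" by linarith
            then have "a1 = 0" by (rule sq0)
            with a1nz show False by simp
          qed
          have "(4*a1 + a5)*(2*a1 + 8*a5) = 0" using h3 b1z by algebra
          then consider "a5 = -4*a1" | "a1 = -4*a5" by force
          then show ?thesis
          proof cases
            case 1
            have "a3 = 2*a1" using A2 1 by simp
            then have "c0 = a1" using 1 by (simp add: c0_def)
            moreover have "?f 0 1 0 = a5" unfolding fv by simp
            ultimately have "(-4*a1)^2 \<le> a1^2" using P1'[of 0 1 0] 1 by simp
            then have "a1^2 \<le> 0" by (simp add: power_mult_distrib)
            then have "a1 = 0" by (rule sq0)
            with a1nz show ?thesis by simp
          next
            case 2
            have "a3 = 2*a5" using A2 2 by simp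
            then have "c0 = a5" using 2 by (simp add: c0_def)
            moreover have "?f 1 0 0 = a1" unfolding fv by simp
            ultimately have "(-4*a5)^2 \<le> a5^2" using P1'[of 1 0 0] 2 by simp
            then have "a5^2 \<le> 0" by (simp add: power_mult_distrib)
            then have "a5 = 0" by (rule sq0)
            with a1nz 2 show ?thesis by simp
          qed
        qed
      next
        case a4nz: False
        have G: "3*a1 + 9*a3 + 4*a5 = 0" using e12 a4nz by simp
        have k1: "18*a4^2 = 162*a3^2 + 162*a3*a5 + 28*a5^2" using f1 G by algebra
        have k2: "18*(b1^2+b2^2) = 10*((3*a3+a5)*(3*a3+4*a5))" using f1 f2 G by algebra
        define Dl where "Dl = (-2*a1-3*a3+3*a5)*(-3*a1+3*a3+2*a5) + 21*a4^2"
        have k3: "Dl*b1 = 0" using e13 e23 unfolding Dl_def by algebra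
        have k4: "Dl*b2 = 0" using e13 e23 unfolding Dl_def by algebra
        have a4sq: "0 < a4^2" using a4nz by simp
        have notA: "a5 \<noteq> -3*a3"
        proof
          assume h: "a5 = -3*a3"
          have "18*a4^2 = -72*a3^2" using k1 h by algebra
          moreover have "0 \<le> a3^2" by simp
          ultimately show False using a4sq by linarith
        qed
        show ?thesis
        proof (cases "Dl = 0")
          case True
          have "(3*a3+a5)*(9*a3+8*a5) = 0" using True k1 G unfolding Dl_def by algebra
          then have h: "9*a3 = -8*a5" using notA by force
          have "162*b1^2 + 162*b2^2 + 200*a5^2 = 0" using k2 h by algebra
          moreover have "0 \<le> b1^2" "0 \<le> b2^2" by simp_all
          ultimately have "a5^2 \<le> 0" by linarith
          then have a5z: "a5 = 0" by (rule sq0)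
          then have "a3 = 0" using h by simp
          then have "a4^2 = 0" using k1 a5z by simp
          with a4sq show ?thesis by simp
        next
          case False
          have b1z: "b1 = 0" using k3 False by simp
          have b2z: "b2 = 0" using k4 False by simp
          have "(3*a3+a5)*(3*a3+4*a5) = 0" using k2 b1z b2z by simp
          then have h: "3*a3 = -4*a5" using notA by force
          have a1e: "3*a1 = 8*a5" using G h by simp
          have a4e: "9*a4^2 = 50*a5^2" using k1 h by algebra
          have v1: "?f 1 1 0 = -13/3*a5 + 4*a4" unfolding fv apply simp using h a1e by linarith
          have v2: "?f 1 (-1) 0 = -13/3*a5 - 4*a4" unfolding fv apply simp using h a1e by linarith
          have a1sq: "a1^2 = (64/9)*a5^2" using a1e by algebra
          have T1: "(-13/3*a5 + 4*a4)^2 \<le> (1024/9)*a5^2" using P2[of 1 1] v1 a1sq by simp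
          have T2: "(-13/3*a5 - 4*a4)^2 \<le> (1024/9)*a5^2" using P2[of 1 "-1"] v2 a1sq by simp
          have L: "(-13/3*a5)^2 + (4*a4)^2 + 2 * (abs ((-13/3*a5)*(4*a4))) \<le> (1024/9)*a5^2"
            by (rule lmax[OF T1 T2])
          have "4*a5^2 \<le> a4^2" using a4e zero_le_power2[of a5] by linarith
          then have q1: "2*a5^2 \<le> (abs (a5*a4))" using lb[of 2 a5 a4] by simp
          have ab: "(abs ((-13/3*a5)*(4*a4))) = 52/3*(abs (a5*a4))" by (simp add: abs_mult)
          have sq1: "(-13/3*a5)^2 = 169/9*a5^2" by (simp add: power2_eq_square)
          have sq2: "(4*a4)^2 = 16*a4^2" by (simp add: power2_eq_square)
          have q2: "169/9*a5^2 + 16*a4^2 + 104/3*(abs (a5*a4)) \<le> (1024/9)*a5^2" using L ab sq1 sq2 by linarith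
          have "a5^2 \<le> 0" using q1 q2 a4e by linarith
          then have a5z: "a5 = 0" by (rule sq0)
          then have "a4^2 = 0" using a4e by simp
          with a4sq show ?thesis by simp
        qed
      qed
    qed
  qed
qed

definition Ccub :: tensor4 where
  "Ccub = (\<lambda>i j k l. (if i = j \<and> j = k \<and> k = l then 1 else 0)
     - ((if i = j \<and> k = l then 1 else 0) + (if i = k \<and> j = l then 1 else 0) + (if i = l \<and> j = k then 1 else 0)) / 5)"

lemma inner3: "(vector [x,y,z] :: real^3) \<bullet> vector [x,y,z] = x^2 + y^2 + z^2"
  by (simp add: inner_vec_def sum_3 power2_eq_square)

lemma core:
  assumes H: "K \<in> H4"
    and off: "d2 K 1 2 = 0" "d2 K 1 3 = 0" "d2 K 2 3 = 0"
    and dg: "d2 K 1 1 = d2 K 2 2" "d2 K 1 1 = d2 K 3 3"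
    and M1: "\<And>y. (form4 K y)^2 \<le> (form4 K (vector [0,0,1]))^2 * (y \<bullet> y)^4"
    and M2: "\<And>y. y$3 = 0 \<Longrightarrow> (form4 K y)^2 \<le> (form4 K (vector [1,0,0]))^2 * (y \<bullet> y)^4"
  shows "K = (\<lambda>i j k l. (5/2 * K 1 1 1 1) * Ccub i j k l)"
proof -
  define a1 where "a1 = K 1 1 1 1"
  define a2 where "a2 = K 1 1 1 2"
  define a3 where "a3 = K 1 1 2 2"
  define a4 where "a4 = K 1 2 2 2"
  define a5 where "a5 = K 2 2 2 2"
  define b1 where "b1 = K 1 1 1 3"
  define b2 where "b2 = K 1 1 2 3"
  define b3 where "b3 = K 1 2 2 3"
  define b4 where "b4 = K 2 2 2 3"
  note defs = a1_def[symmetric] a2_def[symmetric] a3_def[symmetric] a4_def[symmetric] a5_def[symmetric]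
    b1_def[symmetric] b2_def[symmetric] b3_def[symmetric] b4_def[symmetric]
  have fe: "form4 K y = fpoly a1 a2 a3 a4 a5 b1 b2 b3 b4 (y$1) (y$2) (y$3)" for y
    using form4_expand[OF H, of y] by (simp add: defs)
  have f001: "fpoly a1 a2 a3 a4 a5 b1 b2 b3 b4 0 0 1 = a1+2*a3+a5" by (simp add: fpoly_def)
  have f100: "fpoly a1 a2 a3 a4 a5 b1 b2 b3 b4 1 0 0 = a1" by (simp add: fpoly_def)
  have P1: "(fpoly a1 a2 a3 a4 a5 b1 b2 b3 b4 x y z)^2 \<le> (a1+2*a3+a5)^2 * (x^2+y^2+z^2)^4" for x y z
    using M1[of "vector [x,y,z]"] by (simp add: fe f001 inner3)
  have P2: "(fpoly a1 a2 a3 a4 a5 b1 b2 b3 b4 x y 0)^2 \<le> a1^2 * (x^2+y^2)^4" for x y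
    using M2[of "vector [x,y,0]"] by (simp add: fe f100 inner3)
  have D12: "d2 K 1 2 = 4*a1*a2 + 3*a1*a4 + 9*a2*a3 + 3*a2*a5 + 9*a3*a4 + 4*a4*a5 + 4*b1*b2 + b1*b4 + 7*b2*b3 + 4*b3*b4"
    unfolding d2_def by (simp add: sum_3 Kc[OF H] defs algebra_simps power2_eq_square)
  have D13: "d2 K 1 3 = 2*a1*b3 + 3*a2*b4 - 2*a3*b1 + a3*b3 - 3*a4*b2 + 4*a4*b4 - a5*b1 - 4*a5*b3"
    unfolding d2_def by (simp add: sum_3 Kc[OF H] defs algebra_simps power2_eq_square)
  have D23: "d2 K 2 3 = -4*a1*b2 - a1*b4 + 4*a2*b1 - 3*a2*b3 + a3*b2 - 2*a3*b4 + 3*a4*b1 + 2*a5*b2"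
    unfolding d2_def by (simp add: sum_3 Kc[OF H] defs algebra_simps power2_eq_square)
  have D11: "d2 K 1 1 = 4*a1^2 + 6*a1*a3 + 6*a2^2 + 6*a2*a4 + 6*a3^2 + 4*a4^2 + 4*b1^2 + 2*b1*b3 + 6*b2^2 + 4*b3^2"
    unfolding d2_def by (simp add: sum_3 Kc[OF H] defs algebra_simps power2_eq_square)
  have D22: "d2 K 2 2 = 4*a2^2 + 6*a2*a4 + 6*a3^2 + 6*a3*a5 + 6*a4^2 + 4*a5^2 + 4*b2^2 + 2*b2*b4 + 6*b3^2 + 4*b4^2"
    unfolding d2_def by (simp add: sum_3 Kc[OF H] defs algebra_simps power2_eq_square)
  have D33: "d2 K 3 3 = 4*a1^2 + 10*a1*a3 + 2*a1*a5 + 6*a2^2 + 12*a2*a4 + 10*a3^2 + 10*a3*a5 + 6*a4^2 + 4*a5^2 + 4*b1^2 + 6*b1*b3 + 6*b2^2 + 6*b2*b4 + 6*b3^2 + 4*b4^2"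
    unfolding d2_def by (simp add: sum_3 Kc[OF H] defs algebra_simps power2_eq_square)
  have R: "a2 = 0 \<and> a4 = 0 \<and> b1 = 0 \<and> b2 = 0 \<and> b3 = 0 \<and> b4 = 0 \<and> a5 = a1 \<and> 2*a3 = -a1"
  proof (rule core_alg[OF P1 P2])
    show "4*a1*a2 + 3*a1*a4 + 9*a2*a3 + 3*a2*a5 + 9*a3*a4 + 4*a4*a5 + 4*b1*b2 + b1*b4 + 7*b2*b3 + 4*b3*b4 = 0"
      using off(1) D12 by simp
    show "2*a1*b3 + 3*a2*b4 - 2*a3*b1 + a3*b3 - 3*a4*b2 + 4*a4*b4 - a5*b1 - 4*a5*b3 = 0"
      using off(2) D13 by simp
    show "-4*a1*b2 - a1*b4 + 4*a2*b1 - 3*a2*b3 + a3*b2 - 2*a3*b4 + 3*a4*b1 + 2*a5*b2 = 0"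
      using off(3) D23 by simp
    have "4*a1^2 + 6*a1*a3 + 2*a2^2 - 6*a3*a5 - 2*a4^2 - 4*a5^2 + 4*b1^2 + 2*b1*b3 + 2*b2^2 - 2*b2*b4 - 2*b3^2 - 4*b4^2 = d2 K 1 1 - d2 K 2 2" unfolding D11 D22 by algebra
    then show "4*a1^2 + 6*a1*a3 + 2*a2^2 - 6*a3*a5 - 2*a4^2 - 4*a5^2 + 4*b1^2 + 2*b1*b3 + 2*b2^2 - 2*b2*b4 - 2*b3^2 - 4*b4^2 = 0" using dg(1) by simp
    have "-4*a1*a3 - 2*a1*a5 - 6*a2*a4 - 4*a3^2 - 10*a3*a5 - 2*a4^2 - 4*a5^2 - 4*b1*b3 - 6*b2*b4 - 2*b3^2 - 4*b4^2 = d2 K 1 1 - d2 K 3 3" unfolding D11 D33 by algebra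
    then show "-4*a1*a3 - 2*a1*a5 - 6*a2*a4 - 4*a3^2 - 10*a3*a5 - 2*a4^2 - 4*a5^2 - 4*b1*b3 - 6*b2*b4 - 2*b3^2 - 4*b4^2 = 0" using dg(2) by simp
  qed
  have z: "K 1 1 1 2 = 0" "K 1 2 2 2 = 0" "K 1 1 1 3 = 0" "K 1 1 2 3 = 0" "K 1 2 2 3 = 0" "K 2 2 2 3 = 0"
      "K 2 2 2 2 = K 1 1 1 1" "K 1 1 2 2 = -(K 1 1 1 1)/2"
    using R by (simp_all add: a1_def a2_def a3_def a4_def a5_def b1_def b2_def b3_def b4_def)
  have "\<forall>i j k l. K i j k l = (5/2 * K 1 1 1 1) * Ccub i j k l"
    by (simp add: forall_3 Kc[OF H] z Ccub_def)
  then show ?thesis by blast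
qed



lemma form4_row: "act4 M T 1 1 1 1 = form4 T (M$1)"
  unfolding act4_def form4_def by (simp add: mult_ac)

lemma form4_act: "form4 (act4 g T) y = form4 T (transpose g *v y)"
proof -
  have r: "((\<chi> i. y) ** g :: mat3)$1 = transpose g *v y"
    by (simp add: vec_eq_iff matrix_matrix_mult_def matrix_vector_mult_def transpose_def mult.commute)
  have "form4 (act4 g T) y = act4 (\<chi> i. y) (act4 g T) 1 1 1 1" by (simp add: form4_row)
  also have "\<dots> = act4 ((\<chi> i. y) ** g) T 1 1 1 1" by (simp add: act4_mult)
  also have "\<dots> = form4 T (transpose g *v y)" by (simp add: form4_row r)
  finally show ?thesis .
qed

lemma form4_scale: "form4 T (c *\<^sub>R x) = c^4 * form4 T x"
  unfolding form4_def by (simp add: sum_distrib_left mult_ac power4_eq_xxxx)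

lemma form4_zero: "form4 T 0 = 0"
  unfolding form4_def by simp

lemma cont_form4: "continuous_on S (\<lambda>x. (form4 T x)^2)"
  unfolding form4_def by (intro continuous_intros)

lemma unit_perp:
  fixes n :: "real^3" assumes "norm n = 1"
  obtains v where "norm v = 1" "n \<bullet> v = 0"
proof -
  define e1 :: "real^3" where "e1 = vector [1,0,0]"
  define e2 :: "real^3" where "e2 = vector [0,1,0]"
  have "cross3 n e1 \<noteq> 0 \<or> cross3 n e2 \<noteq> 0"
  proof (rule ccontr)
    assume "\<not> ?thesis"
    then have "cross3 n e1 = 0" "cross3 n e2 = 0" by auto
    then have "n$1 = 0" "n$2 = 0" "n$3 = 0"
      by (auto simp: e1_def e2_def cross3_def vec_eq_iff forall_3)
    then have "n = 0" by (simp add: vec_eq_iff forall_3)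
    with assms show False by simp
  qed
  then obtain w where w: "w \<noteq> 0" "n \<bullet> w = 0"
    by (metis dot_cross_self(1))
  show ?thesis
  proof (rule that[of "w /\<^sub>R norm w"])
    show "norm (w /\<^sub>R norm w) = 1" using w by simp
    show "n \<bullet> (w /\<^sub>R norm w) = 0" using w by simp
  qed
qed

lemma tg_vec:
  fixes n1 n2 n3 :: "real^3"
  shows "transpose (vector [n2, n3, n1] :: mat3) *v y = y$1 *\<^sub>R n2 + y$2 *\<^sub>R n3 + y$3 *\<^sub>R n1"
  by (simp add: vec_eq_iff matrix_vector_mult_def transpose_def sum_3 mult.commute)

lemma det_frame:
  fixes n1 n2 :: "real^3"
  shows "det (vector [n2, cross3 n1 n2, n1] :: mat3) = (n1 \<bullet> n1) * (n2 \<bullet> n2) - (n1 \<bullet> n2)^2"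
  by (simp add: det_3 cross3_def inner_vec_def sum_3 power2_eq_square algebra_simps)

lemma frame_SO3:
  fixes n1 n2 :: "real^3"
  assumes a1: "norm n1 = 1" and a2: "norm n2 = 1" and a3: "n1 \<bullet> n2 = 0"
  shows "(vector [n2, cross3 n1 n2, n1] :: mat3) \<in> SO3"
proof -
  let ?g = "vector [n2, cross3 n1 n2, n1] :: mat3"
  have "(norm (cross3 n1 n2))^2 = 1" using norm_cross_dot[of n1 n2] a1 a2 a3 by simp
  then have "norm (cross3 n1 n2) = 1 \<or> norm (cross3 n1 n2) = -1" by (simp add: power2_eq_1_iff)
  then have nc: "norm (cross3 n1 n2) = 1" using norm_ge_zero[of "cross3 n1 n2"] by linarith
  have rows: "row 1 ?g = n2" "row 2 ?g = cross3 n1 n2" "row 3 ?g = n1"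
    by (simp_all add: row_def vec_eq_iff)
  have o1: "n2 \<bullet> cross3 n1 n2 = 0" "cross3 n1 n2 \<bullet> n2 = 0" "n1 \<bullet> cross3 n1 n2 = 0" "cross3 n1 n2 \<bullet> n1 = 0"
    by (simp_all add: dot_cross_self)
  have o2: "n2 \<bullet> n1 = 0" using a3 by (simp add: inner_commute)
  have orth: "orthogonal_matrix ?g"
    unfolding orthogonal_matrix_orthonormal_rows
    by (simp add: forall_3 rows nc a1 a2 a3 o1 o2 orthogonal_def)
  have "n1 \<bullet> n1 = 1" "n2 \<bullet> n2 = 1" using a1 a2 by (simp_all add: power2_norm_eq_inner[symmetric])
  then have "det ?g = 1" using det_frame[of n2 n1] a3 by simp
  then show ?thesis using orth by (simp add: SO3_def)
qed

lemma hom_bound: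
  fixes x n :: "real^3"
  assumes u: "\<And>u. norm u = 1 \<Longrightarrow> P u \<Longrightarrow> (form4 H u)^2 \<le> (form4 H n)^2"
    and Px: "x \<noteq> 0 \<Longrightarrow> P (x /\<^sub>R norm x)"
  shows "(form4 H x)^2 \<le> (form4 H n)^2 * (x \<bullet> x)^4"
proof (cases "x = 0")
  case True then show ?thesis by (simp add: form4_zero)
next
  case False
  define r where "r = norm x"
  have r0: "r > 0" using False by (simp add: r_def)
  have xe: "x = r *\<^sub>R (x /\<^sub>R r)" using r0 by simp
  have "(form4 H x)^2 = (r^4)^2 * (form4 H (x /\<^sub>R r))^2"
    by (subst xe, simp only: form4_scale power_mult_distrib)
  also have "\<dots> \<le> (r^4)^2 * (form4 H n)^2"
    using u[of "x /\<^sub>R r"] Px False r0 by (simp add: r_def)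
  also have "(r^4)^2 = (x \<bullet> x)^4" by (simp add: r_def power2_norm_eq_inner[symmetric] power_mult[symmetric])
  finally show ?thesis by (simp add: mult.commute)
qed

lemma frame:
  obtains g where "g \<in> SO3"
    "\<And>y. (form4 (act4 g H) y)^2 \<le> (form4 (act4 g H) (vector [0,0,1]))^2 * (y \<bullet> y)^4"
    "\<And>y. y$3 = 0 \<Longrightarrow> (form4 (act4 g H) y)^2 \<le> (form4 (act4 g H) (vector [1,0,0]))^2 * (y \<bullet> y)^4"
proof -
  let ?f = "\<lambda>x. (form4 H x)^2"
  have "axis 1 1 \<in> sphere (0::real^3) 1" by simp
  then have ne: "sphere (0::real^3) 1 \<noteq> {}" by blast
  obtain n1 where n1: "n1 \<in> sphere (0::real^3) 1" "\<And>y. y \<in> sphere 0 1 \<Longrightarrow> ?f y \<le> ?f n1"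
    using continuous_attains_sup[OF compact_sphere ne cont_form4] by blast
  have nn1: "norm n1 = 1" using n1(1) by simp
  define S2 where "S2 = sphere (0::real^3) 1 \<inter> {x. n1 \<bullet> x = 0}"
  have cS2: "compact S2" unfolding S2_def by (intro compact_Int_closed compact_sphere closed_hyperplane)
  obtain v where v: "norm v = 1" "n1 \<bullet> v = 0" using unit_perp[OF nn1] by blast
  have neS2: "S2 \<noteq> {}" using v by (auto simp: S2_def)
  obtain n2 where n2: "n2 \<in> S2" "\<And>y. y \<in> S2 \<Longrightarrow> ?f y \<le> ?f n2"
    using continuous_attains_sup[OF cS2 neS2 cont_form4] by blast
  have nn2: "norm n2 = 1" and p12: "n1 \<bullet> n2 = 0" using n2(1) by (auto simp: S2_def)
  define g where "g = (vector [n2, cross3 n1 n2, n1] :: mat3)"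
  have gS: "g \<in> SO3" unfolding g_def by (rule frame_SO3[OF nn1 nn2 p12])
  have tg: "transpose g *v y = y$1 *\<^sub>R n2 + y$2 *\<^sub>R cross3 n1 n2 + y$3 *\<^sub>R n1" for y
    unfolding g_def by (rule tg_vec)
  have o: "orthogonal_matrix g" using gS by (simp add: SO3_def)
  have nrm: "(transpose g *v y) \<bullet> (transpose g *v y) = y \<bullet> y" for y
  proof -
    have "orthogonal_matrix (transpose g)" using o by (simp add: orthogonal_matrix_transpose)
    then have "orthogonal_transformation ((*v) (transpose g))"
      by (simp add: orthogonal_transformation_matrix matrix_of_matrix_vector_mul)
    then have "norm (transpose g *v y) = norm y" by (rule orthogonal_transformation_norm)
    then show ?thesis by (simp add: power2_norm_eq_inner[symmetric])
  qed
  have e3: "transpose g *v vector [0,0,1] = n1" unfolding tg by simp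
  have e1: "transpose g *v vector [1,0,0] = n2" unfolding tg by simp
  have dot3: "n1 \<bullet> (transpose g *v y) = y$3" for y
    unfolding tg using p12 nn1 by (simp add: inner_add_right dot_cross_self power2_norm_eq_inner[symmetric])
  show ?thesis
  proof (rule that[OF gS])
    fix y :: "real^3"
    show "(form4 (act4 g H) y)^2 \<le> (form4 (act4 g H) (vector [0,0,1]))^2 * (y \<bullet> y)^4"
    proof -
      have "(form4 H (transpose g *v y))^2 \<le> (form4 H n1)^2 * ((transpose g *v y) \<bullet> (transpose g *v y))^4"
        by (rule hom_bound[where P = "\<lambda>u. True"]) (use n1(2) in auto)
      then show ?thesis unfolding form4_act e3 nrm[of y] .
    qed
  next
    fix y :: "real^3" assume y3: "y$3 = 0"
    have "n1 \<bullet> (transpose g *v y) = 0" using dot3 y3 by simp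
    then show "(form4 (act4 g H) y)^2 \<le> (form4 (act4 g H) (vector [1,0,0]))^2 * (y \<bullet> y)^4"
    proof -
      have "(form4 H (transpose g *v y))^2 \<le> (form4 H n2)^2 * ((transpose g *v y) \<bullet> (transpose g *v y))^4"
        by (rule hom_bound[where P = "\<lambda>u. n1 \<bullet> u = 0"]) (use n2(2) \<open>n1 \<bullet> (transpose g *v y) = 0\<close> in \<open>auto simp: S2_def\<close>)
      then show ?thesis unfolding form4_act e1 nrm[of y] .
    qed
  qed
qed

lemma act4_smult: "act4 g (\<lambda>i j k l. c * T i j k l) = (\<lambda>i j k l. c * act4 g T i j k l)"
  unfolding act4_def by (simp add: sum_distrib_left mult_ac)

lemma symgroup4_smult:
  assumes "c \<noteq> 0" shows "symgroup4 (\<lambda>i j k l. c * T i j k l) = symgroup4 T"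
proof -
  have "act4 g (\<lambda>i j k l. c * T i j k l) = (\<lambda>i j k l. c * T i j k l) \<longleftrightarrow> act4 g T = T" for g
    using assms by (simp add: act4_smult fun_eq_iff)
  then show ?thesis by (simp add: symgroup4_def)
qed

lemma act4_inv: "orthogonal_matrix q \<Longrightarrow> act4 (transpose q) (act4 q T) = T"
  by (simp add: act4_mult[symmetric] orth_tg act4_one)

lemma act4_inv': "orthogonal_matrix q \<Longrightarrow> act4 q (act4 (transpose q) T) = T"
  by (simp add: act4_mult[symmetric] orth_gt act4_one)

lemma act2_inv: "orthogonal_matrix q \<Longrightarrow> act2 (transpose q) (act2 q T) = T"
  by (simp add: act2_mult[symmetric] orth_tg act2_one)

lemma act2_inv': "orthogonal_matrix q \<Longrightarrow> act2 q (act2 (transpose q) T) = T"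
  by (simp add: act2_mult[symmetric] orth_gt act2_one)

lemma symgroup4_act:
  assumes q: "q \<in> SO3"
  shows "symgroup4 (act4 q T) = (\<lambda>h. q ** h ** matrix_inv q) ` symgroup4 T"
proof -
  have o: "orthogonal_matrix q" using q by (rule SO3_orth)
  have mi: "matrix_inv q = transpose q" using o by (rule matrix_inv_orth)
  show ?thesis
  proof
    show "symgroup4 (act4 q T) \<subseteq> (\<lambda>h. q ** h ** matrix_inv q) ` symgroup4 T"
    proof
      fix g assume g: "g \<in> symgroup4 (act4 q T)"
      then have gS: "g \<in> SO3" and ga: "act4 g (act4 q T) = act4 q T" by (auto simp: symgroup4_def)
      define h where "h = transpose q ** g ** q"
      have hS: "h \<in> SO3" unfolding h_def using q gS by (intro SO3_mult SO3_transpose)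
      have "act4 h T = act4 (transpose q) (act4 g (act4 q T))" by (simp add: h_def act4_mult)
      also have "\<dots> = T" using ga o by (simp add: act4_inv)
      finally have "h \<in> symgroup4 T" using hS by (simp add: symgroup4_def)
      moreover have "g = q ** h ** matrix_inv q"
      proof -
        have "q ** h ** transpose q = (q ** transpose q) ** g ** (q ** transpose q)"
          by (simp add: h_def matrix_mul_assoc)
        then show ?thesis by (simp add: mi orth_gt[OF o] matrix_mul_lid matrix_mul_rid)
      qed
      ultimately show "g \<in> (\<lambda>h. q ** h ** matrix_inv q) ` symgroup4 T" by blast
    qed
  next
    show "(\<lambda>h. q ** h ** matrix_inv q) ` symgroup4 T \<subseteq> symgroup4 (act4 q T)"
    proof
      fix g assume "g \<in> (\<lambda>h. q ** h ** matrix_inv q) ` symgroup4 T"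
      then obtain h where h: "h \<in> symgroup4 T" and gdef: "g = q ** h ** transpose q" by (auto simp: mi)
      have hS: "h \<in> SO3" and ha: "act4 h T = T" using h by (auto simp: symgroup4_def)
      have gS: "g \<in> SO3" unfolding gdef using q hS by (intro SO3_mult SO3_transpose)
      have "act4 g (act4 q T) = act4 q (act4 h (act4 (transpose q) (act4 q T)))"
        by (simp add: gdef act4_mult)
      also have "\<dots> = act4 q T" using o ha by (simp add: act4_inv)
      finally show "g \<in> symgroup4 (act4 q T)" using gS by (simp add: symgroup4_def)
    qed
  qed
qed

section \<open>The cube group\<close>

definition spm :: "mat3 \<Rightarrow> bool" where
  "spm g \<longleftrightarrow> (\<forall>i j. g$i$j = -1 \<or> g$i$j = 0 \<or> g$i$j = 1)"

lemma three_abs: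
  fixes a b c :: real
  assumes "\<bar>a\<bar> + \<bar>b\<bar> + \<bar>c\<bar> \<le> 1" "a^2 + b^2 + c^2 = 1"
  shows "a = -1 \<or> a = 0 \<or> a = 1"
proof -
  have le: "x^2 \<le> \<bar>x\<bar>" if "\<bar>x\<bar> \<le> 1" for x :: real
  proof -
    have "\<bar>x\<bar> * \<bar>x\<bar> \<le> \<bar>x\<bar> * 1" using that by (intro mult_left_mono) auto
    then show ?thesis by (simp add: power2_eq_square)
  qed
  have "a^2 \<le> \<bar>a\<bar>" "b^2 \<le> \<bar>b\<bar>" "c^2 \<le> \<bar>c\<bar>" using assms(1) by (intro le; linarith)+
  then have e: "a^2 = \<bar>a\<bar>" using assms by linarith
  have "\<bar>a\<bar> * (\<bar>a\<bar> - 1) = 0" using e by (simp add: power2_eq_square algebra_simps)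
  then have "\<bar>a\<bar> = 0 \<or> \<bar>a\<bar> = 1" by simp
  then show ?thesis by auto
qed

lemma three_four:
  fixes a b c :: real
  assumes "a^2 + b^2 + c^2 = 1" "a^4 + b^4 + c^4 = 1"
  shows "a = -1 \<or> a = 0 \<or> a = 1"
proof -
  have le: "x^4 \<le> x^2" if "x^2 \<le> 1" for x :: real
  proof -
    have "x^2 * x^2 \<le> x^2 * 1" using that by (intro mult_left_mono) auto
    then show ?thesis by (simp add: power4_eq_xxxx power2_eq_square)
  qed
  have "a^2 \<le> 1" "b^2 \<le> 1" "c^2 \<le> 1" using assms(1) zero_le_power2[of a] zero_le_power2[of b] zero_le_power2[of c] by linarith+
  then have "a^4 \<le> a^2" "b^4 \<le> b^2" "c^4 \<le> c^2" by (simp_all add: le)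
  then have e: "a^4 = a^2" using assms by linarith
  have "a^2 * (a^2 - 1) = 0" using e by (simp add: power4_eq_xxxx power2_eq_square algebra_simps)
  then have "a^2 = 0 \<or> a^2 = 1" by simp
  then show ?thesis by (auto simp: power2_eq_1_iff)
qed

lemma mult_sgn_self: "(x::real) * sgn x = \<bar>x\<bar>"
  by (cases x "0::real" rule: linorder_cases) auto

lemma orth_row3: "orthogonal_matrix (g::mat3) \<Longrightarrow> (g$i$1)^2 + (g$i$2)^2 + (g$i$3)^2 = 1"
  using orth_row[of g i i] by (simp add: sum_3 power2_eq_square)

lemma orth_col3: "orthogonal_matrix (g::mat3) \<Longrightarrow> (g$1$j)^2 + (g$2$j)^2 + (g$3$j)^2 = 1"
  using orth_col[of g j j] by (simp add: sum_3 power2_eq_square)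

lemma Octa_spm:
  assumes "g \<in> Octa" shows "spm g"
proof -
  have gS: "g \<in> SO3" and img: "(\<lambda>x. g *v x) ` cube = cube" using assms by (auto simp: Octa_def)
  have o: "orthogonal_matrix g" using gS by (rule SO3_orth)
  have row: "\<bar>g$i$1\<bar> + \<bar>g$i$2\<bar> + \<bar>g$i$3\<bar> \<le> 1" for i
  proof -
    define x :: "real^3" where "x = (\<chi> j. sgn (g$i$j))"
    have "x \<in> cube" by (simp add: x_def cube_def abs_sgn_eq)
    then have "g *v x \<in> cube" using img by blast
    then have "\<bar>(g *v x)$i\<bar> \<le> 1" by (simp add: cube_def)
    moreover have "(g *v x)$i = \<bar>g$i$1\<bar> + \<bar>g$i$2\<bar> + \<bar>g$i$3\<bar>"
      by (simp add: matrix_vector_mult_def x_def sum_3 mult_sgn_self)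
    ultimately show ?thesis by simp
  qed
  have "g$i$j = -1 \<or> g$i$j = 0 \<or> g$i$j = 1" for i j
  proof -
    have r: "(g$i$1)^2 + (g$i$2)^2 + (g$i$3)^2 = 1" using o by (rule orth_row3)
    consider "j = 1" | "j = 2" | "j = 3" using exhaust_3 by blast
    then show ?thesis
    proof cases
      case 1 then show ?thesis using three_abs[OF row r] by simp
    next
      case 2 then show ?thesis using three_abs[of "g$i$2" "g$i$1" "g$i$3"] row[of i] r by (simp add: ac_simps)
    next
      case 3 then show ?thesis using three_abs[of "g$i$3" "g$i$1" "g$i$2"] row[of i] r by (simp add: ac_simps)
    qed
  qed
  then show ?thesis by (simp add: spm_def)
qed

lemma spm_transpose: "spm g \<Longrightarrow> spm (transpose g)"
  by (simp add: spm_def transpose_def)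

lemma spm_abs: "\<bar>g$i$j\<bar> = (g$i$j)^2" if "spm g"
proof -
  have "g$i$j = -1 \<or> g$i$j = 0 \<or> g$i$j = 1" using that by (simp add: spm_def)
  then show ?thesis by auto
qed

lemma spm_cube_sub:
  assumes gS: "g \<in> SO3" and sp: "spm g" and x: "x \<in> cube"
  shows "g *v x \<in> cube"
proof -
  have o: "orthogonal_matrix g" using gS by (rule SO3_orth)
  have "\<bar>(g *v x)$i\<bar> \<le> 1" for i
  proof -
    have "\<bar>(g *v x)$i\<bar> = \<bar>g$i$1 * x$1 + g$i$2 * x$2 + g$i$3 * x$3\<bar>"
      by (simp add: matrix_vector_mult_def sum_3)
    also have "\<dots> \<le> \<bar>g$i$1\<bar> * \<bar>x$1\<bar> + \<bar>g$i$2\<bar> * \<bar>x$2\<bar> + \<bar>g$i$3\<bar> * \<bar>x$3\<bar>"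
      using abs_triangle_ineq[of "g$i$1 * x$1 + g$i$2 * x$2" "g$i$3 * x$3"]
        abs_triangle_ineq[of "g$i$1 * x$1" "g$i$2 * x$2"] by (simp add: abs_mult)
    also have "\<dots> \<le> \<bar>g$i$1\<bar> + \<bar>g$i$2\<bar> + \<bar>g$i$3\<bar>"
      using x by (intro add_mono mult_left_le; simp add: cube_def)
    also have "\<dots> = 1" using orth_row3[OF o, of i] by (simp add: spm_abs[OF sp])
    finally show ?thesis .
  qed
  then show ?thesis by (simp add: cube_def)
qed

lemma spm_Octa:
  assumes gS: "g \<in> SO3" and sp: "spm g" shows "g \<in> Octa"
proof -
  have o: "orthogonal_matrix g" using gS by (rule SO3_orth)
  have "(\<lambda>x. g *v x) ` cube = cube"
  proof
    show "(\<lambda>x. g *v x) ` cube \<subseteq> cube" using spm_cube_sub[OF gS sp] by blast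
  next
    show "cube \<subseteq> (\<lambda>x. g *v x) ` cube"
    proof
      fix x assume x: "x \<in> cube"
      have "transpose g *v x \<in> cube"
        using spm_cube_sub[OF SO3_transpose[OF gS] spm_transpose[OF sp] x] .
      moreover have "g *v (transpose g *v x) = x"
        by (simp only: matrix_vector_mul_assoc orth_gt[OF o] matrix_vector_mul_lid)
      ultimately show "x \<in> (\<lambda>x. g *v x) ` cube" by (metis image_eqI)
    qed
  qed
  then show ?thesis using gS by (simp add: Octa_def)
qed

lemma Octa_iff: "g \<in> Octa \<longleftrightarrow> g \<in> SO3 \<and> spm g"
  using Octa_spm spm_Octa by (auto simp: Octa_def)

section \<open>Symmetry of the cubic tensor\<close>

lemma act4_Ccub:
  "act4 g Ccub i j k l =
     (\<Sum>a\<in>UNIV. g$i$a * g$j$a * g$k$a * g$l$a)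
     - ((\<Sum>a\<in>UNIV. g$i$a * g$j$a) * (\<Sum>a\<in>UNIV. g$k$a * g$l$a)
      + (\<Sum>a\<in>UNIV. g$i$a * g$k$a) * (\<Sum>a\<in>UNIV. g$j$a * g$l$a)
      + (\<Sum>a\<in>UNIV. g$i$a * g$l$a) * (\<Sum>a\<in>UNIV. g$j$a * g$k$a)) / 5"
  unfolding act4_def Ccub_def by (simp add: sum_3 field_simps)





lemma spm_sq: "spm g \<Longrightarrow> (g$i$a)^2 = 1 \<or> g$i$a = 0"
  unfolding spm_def by (metis power2_minus one_power2)

lemma spm_prod0:
  assumes gS: "g \<in> SO3" and sp: "spm g" and ij: "i \<noteq> j"
  shows "g$i$a * g$j$a = 0"
proof (rule ccontr)
  assume nz: "g$i$a * g$j$a \<noteq> 0"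
  have o: "orthogonal_matrix g" using gS by (rule SO3_orth)
  have ia: "(g$i$a)^2 = 1" using spm_sq[OF sp, of i a] nz by auto
  have tot: "(\<Sum>b\<in>UNIV. g$i$b * g$i$b) = 1" using orth_row[OF o, of i i] by simp
  have rem: "(\<Sum>b\<in>UNIV. g$i$b * g$i$b) = g$i$a * g$i$a + (\<Sum>b\<in>UNIV-{a}. g$i$b * g$i$b)"
    by (simp add: sum.remove)
  have "(\<Sum>b\<in>UNIV-{a}. g$i$b * g$i$b) = 0" using tot rem ia by (simp add: power2_eq_square)
  then have z: "\<forall>b\<in>UNIV-{a}. g$i$b * g$i$b = 0"
    by (subst (asm) sum_nonneg_eq_0_iff) auto
  have "(\<Sum>b\<in>UNIV. g$i$b * g$j$b) = g$i$a * g$j$a + (\<Sum>b\<in>UNIV-{a}. g$i$b * g$j$b)"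
    by (simp add: sum.remove)
  also have "(\<Sum>b\<in>UNIV-{a}. g$i$b * g$j$b) = 0" using z by (intro sum.neutral) auto
  finally have "(\<Sum>b\<in>UNIV. g$i$b * g$j$b) = g$i$a * g$j$a" by simp
  moreover have "(\<Sum>b\<in>UNIV. g$i$b * g$j$b) = 0" using orth_row[OF o, of i j] ij by simp
  ultimately show False using nz by simp
qed

lemma spm_Dt:
  assumes gS: "g \<in> SO3" and sp: "spm g"
  shows "(\<Sum>a\<in>UNIV. g$i$a * g$j$a * g$k$a * g$l$a) = (if i = j \<and> j = k \<and> k = l then 1 else 0)"
proof (cases "i = j \<and> j = k \<and> k = l")
  case True
  have o: "orthogonal_matrix g" using gS by (rule SO3_orth)
  have q: "g$i$a * g$i$a * g$i$a * g$i$a = g$i$a * g$i$a" for a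
  proof -
    have "(g$i$a)^2 = 1 \<or> g$i$a = 0" by (rule spm_sq[OF sp])
    then show ?thesis by (auto simp: power2_eq_square)
  qed
  have e: "j = i" "k = i" "l = i" using True by auto
  have "(\<Sum>a\<in>UNIV. g$i$a * g$i$a * g$i$a * g$i$a) = (\<Sum>a\<in>UNIV. g$i$a * g$i$a)"
    by (rule sum.cong[OF refl]) (rule q)
  also have "\<dots> = 1" using orth_row[OF o, of i i] by simp
  finally show ?thesis unfolding e by simp
next
  case False
  then consider "i \<noteq> j" | "j \<noteq> k" | "k \<noteq> l" by blast
  then have z: "g$i$a * g$j$a * g$k$a * g$l$a = 0" for a
  proof cases
    case 1
    have "g$i$a * g$j$a = 0" by (rule spm_prod0[OF gS sp 1])
    then show ?thesis by simp
  next
    case 2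
    have "g$j$a * g$k$a = 0" by (rule spm_prod0[OF gS sp 2])
    then have "g$i$a * (g$j$a * g$k$a) * g$l$a = 0" by simp
    then show ?thesis by (simp add: mult.assoc)
  next
    case 3
    have "g$k$a * g$l$a = 0" by (rule spm_prod0[OF gS sp 3])
    then have "g$i$a * g$j$a * (g$k$a * g$l$a) = 0" by simp
    then show ?thesis by (simp add: mult.assoc)
  qed
  have "(\<Sum>a\<in>UNIV. g$i$a * g$j$a * g$k$a * g$l$a) = 0" by (simp only: z sum.neutral_const)
  then show ?thesis using False by simp
qed

lemma if_prod01: "(if P then 1 else 0) * (if Q then 1 else 0) = (if P \<and> Q then (1::real) else 0)"
  by simp

lemma Ccub_spm:
  assumes gS: "g \<in> SO3" and sp: "spm g"
  shows "act4 g Ccub = Ccub"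
proof (intro ext)
  fix i j k l
  have o: "orthogonal_matrix g" using gS by (rule SO3_orth)
  show "act4 g Ccub i j k l = Ccub i j k l"
    unfolding act4_Ccub spm_Dt[OF gS sp] orth_row[OF o] if_prod01 unfolding Ccub_def by (rule refl)
qed

lemma spm_of_Ccub:
  assumes gS: "g \<in> SO3" and a: "act4 g Ccub = Ccub"
  shows "spm g"
proof -
  have o: "orthogonal_matrix g" using gS by (rule SO3_orth)
  have t: "act4 (transpose g) Ccub = Ccub" using a act4_inv[OF o, of Ccub] by simp
  have "g$c$j = -1 \<or> g$c$j = 0 \<or> g$c$j = 1" for c j
  proof -
    have "act4 (transpose g) Ccub j j j j = Ccub j j j j" using t by simp
    then have e: "(g$1$j)^4 + (g$2$j)^4 + (g$3$j)^4 - 3 * ((g$1$j)^2 + (g$2$j)^2 + (g$3$j)^2)^2 / 5 = 2/5"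
      unfolding act4_Ccub by (simp add: sum_3 transpose_def Ccub_def power2_eq_square power4_eq_xxxx)
    have c: "(g$1$j)^2 + (g$2$j)^2 + (g$3$j)^2 = 1" using o by (rule orth_col3)
    have c4: "(g$1$j)^4 + (g$2$j)^4 + (g$3$j)^4 = 1" using e c by simp
    consider "c = 1" | "c = 2" | "c = 3" using exhaust_3 by blast
    then show ?thesis
    proof cases
      case 1 then show ?thesis using three_four[OF c c4] by simp
    next
      case 2 then show ?thesis using three_four[of "g$2$j" "g$1$j" "g$3$j"] c c4 by (simp add: ac_simps)
    next
      case 3 then show ?thesis using three_four[of "g$3$j" "g$1$j" "g$2$j"] c c4 by (simp add: ac_simps)
    qed
  qed
  then show ?thesis by (simp add: spm_def)
qed

lemma symgroup4_Ccub: "symgroup4 Ccub = Octa"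
  unfolding symgroup4_def using Ccub_spm spm_of_Ccub Octa_iff by blast




definition D1m :: mat3 where "D1m = vector [vector [1,0,0], vector [0,-1,0], vector [0,0,-1]]"
definition D2m :: mat3 where "D2m = vector [vector [-1,0,0], vector [0,1,0], vector [0,0,-1]]"
definition Pm :: mat3 where "Pm = vector [vector [0,1,0], vector [0,0,1], vector [1,0,0]]"

lemma D1m_Octa: "D1m \<in> Octa"
  unfolding Octa_iff spm_def SO3_def orthogonal_matrix_def
  by (simp add: D1m_def matrix_matrix_mult_def transpose_def mat_def vec_eq_iff forall_3 sum_3 det_3)

lemma D2m_Octa: "D2m \<in> Octa"
  unfolding Octa_iff spm_def SO3_def orthogonal_matrix_def
  by (simp add: D2m_def matrix_matrix_mult_def transpose_def mat_def vec_eq_iff forall_3 sum_3 det_3)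

lemma Pm_Octa: "Pm \<in> Octa"
  unfolding Octa_iff spm_def SO3_def orthogonal_matrix_def
  by (simp add: Pm_def matrix_matrix_mult_def transpose_def mat_def vec_eq_iff forall_3 sum_3 det_3)

lemma Octa_SO3: "g \<in> Octa \<Longrightarrow> g \<in> SO3" by (simp add: Octa_def)

lemma fixed_iso:
  assumes a1: "act2 D1m S = S" and a2: "act2 D2m S = S" and a3: "act2 Pm S = S"
  shows "S = (\<lambda>i j. if i = j then S 1 1 else 0)"
proof -
  have c1: "act2 D1m S i j = S i j" for i j using a1 by simp
  have c2: "act2 D2m S i j = S i j" for i j using a2 by simp
  have c3: "act2 Pm S i j = S i j" for i j using a3 by simp
  have "S 1 2 = 0" using c1[of 1 2] by (simp add: act2_def sum_3 D1m_def)
  moreover have "S 2 1 = 0" using c1[of 2 1] by (simp add: act2_def sum_3 D1m_def)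
  moreover have "S 1 3 = 0" using c1[of 1 3] by (simp add: act2_def sum_3 D1m_def)
  moreover have "S 3 1 = 0" using c1[of 3 1] by (simp add: act2_def sum_3 D1m_def)
  moreover have "S 2 3 = 0" using c2[of 2 3] by (simp add: act2_def sum_3 D2m_def)
  moreover have "S 3 2 = 0" using c2[of 3 2] by (simp add: act2_def sum_3 D2m_def)
  moreover have "S 1 1 = S 2 2" using c3[of 1 1] by (simp add: act2_def sum_3 Pm_def)
  moreover have "S 2 2 = S 3 3" using c3[of 2 2] by (simp add: act2_def sum_3 Pm_def)
  ultimately show ?thesis by (simp add: fun_eq_iff forall_3)
qed

lemma fixed_iso_Octa:
  assumes "\<And>q. q \<in> Octa \<Longrightarrow> act2 q S = S"
  shows "S = (\<lambda>i j. if i = j then S 1 1 else 0)"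
  using fixed_iso assms D1m_Octa D2m_Octa Pm_Octa by blast

lemma act2_iso:
  assumes o: "orthogonal_matrix r"
  shows "act2 r (\<lambda>i j. if i = j then c else 0) = (\<lambda>i j. if i = j then c else 0)"
proof (intro ext)
  fix i j
  have "act2 r (\<lambda>i j. if i = j then c else 0) i j = c * (\<Sum>a\<in>UNIV. r$i$a * r$j$a)"
    by (simp add: act2_def sum_3 algebra_simps)
  then show "act2 r (\<lambda>i j. if i = j then c else 0) i j = (if i = j then c else 0)"
    using orth_row[OF o, of i j] by simp
qed

lemma d2_zero_H:
  assumes H: "H \<in> H4" and z: "d2 H = (\<lambda>i j. 0)"
  shows "H = (\<lambda>i j k l. 0)"
proof -
  have "d2s H i i = 0" for i using z d2_d2s[OF H] by simp
  then have s: "(\<Sum>k\<in>UNIV. \<Sum>m\<in>UNIV. \<Sum>n\<in>UNIV. H i k m n * H i k m n) = 0" for i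
    by (simp add: d2s_def)
  have "H i k m n = 0" for i k m n
  proof -
    have nn: "0 \<le> (\<Sum>n\<in>UNIV. H i k m n * H i k m n)" for i k m by (intro sum_nonneg) simp
    have nn2: "0 \<le> (\<Sum>m\<in>UNIV. \<Sum>n\<in>UNIV. H i k m n * H i k m n)" for i k
      by (intro sum_nonneg nn)
    have "(\<Sum>m\<in>UNIV. \<Sum>n\<in>UNIV. H i k m n * H i k m n) = 0"
      using s[of i] nn2 by (simp add: sum_nonneg_eq_0_iff)
    then have "(\<Sum>n\<in>UNIV. H i k m n * H i k m n) = 0"
      using nn by (simp add: sum_nonneg_eq_0_iff)
    then have "H i k m n * H i k m n = 0" by (simp add: sum_nonneg_eq_0_iff)
    then show ?thesis by simp
  qed
  then show ?thesis by blast
qed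

lemma symgroup4_zero: "symgroup4 (\<lambda>i j k l. 0) = SO3"
  by (simp add: symgroup4_def act4_def)

lemma hard_dir:
  assumes H: "H \<in> H4" and nz: "H \<noteq> (\<lambda>i j k l. 0)"
    and iso: "d2 H = (\<lambda>i j. if i = j then c else 0)"
  shows "in_class (symgroup4 H) Octa"
proof -
  obtain g where gS: "g \<in> SO3"
    and M1: "\<And>y. (form4 (act4 g H) y)^2 \<le> (form4 (act4 g H) (vector [0,0,1]))^2 * (y \<bullet> y)^4"
    and M2: "\<And>y. y$3 = 0 \<Longrightarrow> (form4 (act4 g H) y)^2 \<le> (form4 (act4 g H) (vector [1,0,0]))^2 * (y \<bullet> y)^4"
    using frame[where H=H] by blast
  have o: "orthogonal_matrix g" using gS by (rule SO3_orth)
  define K where "K = act4 g H"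
  have KH: "K \<in> H4" unfolding K_def using o H by (rule act4_H4)
  have dK: "d2 K = (\<lambda>i j. if i = j then c else 0)"
    unfolding K_def using d2_act4[OF o H] iso act2_iso[OF o] by simp
  have Kc: "K = (\<lambda>i j k l. (5/2 * K 1 1 1 1) * Ccub i j k l)"
    by (rule core[OF KH]) (use dK M1 M2 in \<open>simp_all add: K_def\<close>)
  define mu where "mu = 5/2 * K 1 1 1 1"
  have Kc': "K = (\<lambda>i j k l. mu * Ccub i j k l)" unfolding mu_def by (rule Kc)
  have HK: "H = act4 (transpose g) K" unfolding K_def using act4_inv[OF o] by simp
  have mu0: "mu \<noteq> 0"
  proof
    assume "mu = 0"
    then have "K = (\<lambda>i j k l. 0)" by (simp only: Kc') simp
    then have "H = (\<lambda>i j k l. 0)" using HK by (simp add: act4_def)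
    with nz show False by simp
  qed
  have sK: "symgroup4 K = Octa"
    unfolding Kc' using symgroup4_smult[OF mu0, of Ccub] symgroup4_Ccub by simp
  have gT: "transpose g \<in> SO3" using gS by (rule SO3_transpose)
  have "symgroup4 H = (\<lambda>h. transpose g ** h ** matrix_inv (transpose g)) ` Octa"
    using HK symgroup4_act[OF gT, of K] sK by simp
  then show ?thesis unfolding in_class_def using gT by blast
qed

lemma inv_of_Octa_class:
  assumes H: "H \<in> H4" and F: "equiv_poly_map2 F"
    and cls: "in_class (symgroup4 H) Octa" and g: "g \<in> SO3"
  shows "act2 g (F H) = F H"
proof -
  obtain q where qS: "q \<in> SO3" and sg: "symgroup4 H = (\<lambda>h. q ** h ** matrix_inv q) ` Octa"
    using cls unfolding in_class_def by blast
  have oq: "orthogonal_matrix q" using qS by (rule SO3_orth)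
  have mi: "matrix_inv q = transpose q" using oq by (rule matrix_inv_orth)
  have eqv: "\<And>k. k \<in> SO3 \<Longrightarrow> F (act4 k H) = act2 k (F H)" using F H by (simp add: equiv_poly_map2_def)
  define S' where "S' = act2 (transpose q) (F H)"
  have fix': "act2 r S' = S'" if r: "r \<in> Octa" for r
  proof -
    have "q ** r ** transpose q \<in> symgroup4 H" using sg r mi by auto
    then have kS: "q ** r ** transpose q \<in> SO3" and kH: "act4 (q ** r ** transpose q) H = H"
      by (auto simp: symgroup4_def)
    have "act2 (q ** r ** transpose q) (F H) = F H" using eqv[OF kS] kH by simp
    then have "act2 q (act2 r S') = F H" by (simp add: act2_mult S'_def)
    then have "act2 (transpose q) (act2 q (act2 r S')) = S'" by (simp add: S'_def)
    then show ?thesis using act2_inv[OF oq] by simp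
  qed
  define c' where "c' = S' 1 1"
  have Siso: "S' = (\<lambda>i j. if i = j then c' else 0)" unfolding c'_def using fixed_iso_Octa fix' by blast
  have e1: "F H = act2 q S'" unfolding S'_def using act2_inv'[OF oq, of "F H"] by simp
  have FH: "F H = (\<lambda>i j. if i = j then c' else 0)" unfolding e1 Siso by (rule act2_iso[OF oq])
  show ?thesis unfolding FH using act2_iso[OF SO3_orth[OF g]] by simp
qed

theorem theorem9p3:
  assumes "H \<in> H4"
  shows "(in_class (symgroup2_fam (Cov2 H)) SO3
            \<longleftrightarrow> ((d2 H \<noteq> (\<lambda>i j. 0) \<and> in_class (symgroup4 H) Octa)
                 \<or> (d2 H = (\<lambda>i j. 0) \<and> in_class (symgroup4 H) SO3)))
       \<and> (in_class (symgroup2_fam (Cov2 H)) SO3 \<longleftrightarrow> in_class (symgroup2 (d2 H)) SO3)"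
proof -
  note H = assms
  let ?I = "in_class (symgroup2_fam (Cov2 H)) SO3"
  let ?C = "(d2 H \<noteq> (\<lambda>i j. 0) \<and> in_class (symgroup4 H) Octa) \<or> (d2 H = (\<lambda>i j. 0) \<and> in_class (symgroup4 H) SO3)"
  let ?D = "in_class (symgroup2 (d2 H)) SO3"
  have I_iff: "?I \<longleftrightarrow> (\<forall>g\<in>SO3. \<forall>S\<in>Cov2 H. act2 g S = S)"
    unfolding in_class_SO3' symgroup2_fam_def symgroup2_def by auto
  have D_iff: "?D \<longleftrightarrow> (\<forall>g\<in>SO3. act2 g (d2 H) = d2 H)"
    unfolding in_class_SO3' symgroup2_def by auto
  have d2C: "d2 H \<in> Cov2 H" using d2_equiv by (auto simp: Cov2_def)
  have ItoD: "?I \<Longrightarrow> ?D" using I_iff D_iff d2C by blast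
  have DtoC: "?C" if D: "?D"
  proof -
    have inv: "act2 q (d2 H) = d2 H" if "q \<in> Octa" for q
      using D D_iff Octa_SO3[OF that] by blast
    have iso: "d2 H = (\<lambda>i j. if i = j then d2 H 1 1 else 0)" using fixed_iso_Octa inv by blast
    show ?thesis
    proof (cases "H = (\<lambda>i j k l. 0)")
      case True
      have "d2 H = (\<lambda>i j. 0)" using True by (simp add: d2_def)
      moreover have "in_class (symgroup4 H) SO3" using True symgroup4_zero in_class_SO3' by simp
      ultimately show ?thesis by simp
    next
      case False
      have "d2 H \<noteq> (\<lambda>i j. 0)" using d2_zero_H[OF H] False by blast
      moreover have "in_class (symgroup4 H) Octa" by (rule hard_dir[OF H False iso])
      ultimately show ?thesis by simp
    qed
  qed
  have CtoI: "?I" if C: "?C"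
  proof -
    have "act2 g S = S" if g: "g \<in> SO3" and S: "S \<in> Cov2 H" for g S
    proof -
      obtain F where F: "equiv_poly_map2 F" and SF: "S = F H" using S by (auto simp: Cov2_def)
      from C show ?thesis
      proof
        assume "d2 H \<noteq> (\<lambda>i j. 0) \<and> in_class (symgroup4 H) Octa"
        then show ?thesis using inv_of_Octa_class[OF H F _ g] SF by simp
      next
        assume "d2 H = (\<lambda>i j. 0) \<and> in_class (symgroup4 H) SO3"
        then have "symgroup4 H = SO3" using in_class_SO3' by blast
        then have "act4 g H = H" using g by (auto simp: symgroup4_def)
        moreover have "F (act4 g H) = act2 g (F H)" using F H g by (simp add: equiv_poly_map2_def)
        ultimately show ?thesis using SF by simp
      qed
    qed
    then show ?thesis using I_iff by blast
  qed
  show ?thesis using ItoD DtoC CtoI by blast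
qed

end
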